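(* Let $S$ be a semibounded relation in $\mathfrak H$ with lower bound $\gamma\in\mathbb R$ and let $c\le\gamma$. For every semibounded selfadjoint extension $H$ of $S$ one has: $c\le H$ if and only if $\mathfrak t_{S_{{\rm K},c}}\le\mathfrak t_H$ (i.e. $S_{{\rm K},c}\le H$).
   Context: Linear relations in $\mathfrak H$ are linear subspaces of $\mathfrak H\times\mathfrak H$; $T^*$ adjoint, $T^{**}$ closure, $RT=\{\{f,h\}:\exists g,\{f,g\}\in T,\{g,h\}\in R\}$, $c+T=\{\{f,g+cf\}:\{f,g\}\in T\}$. $S$ is semibounded with lower bound $\gamma$ if $\gamma$ is the supremum of all $c$ with $(\varphi',\varphi)\ge c\|\varphi\|^2$ on $S$; $\mathfrak t(S)[\varphi,\psi]=(\varphi',\psi)$ on $\mathrm{dom}\,S$. A representing map for $\mathfrak t(S)-c$ is a linear operator $Q_c$ into a Hilbert space with $\mathrm{dom}\,Q_c=\mathrm{dom}\,S$ and $\mathfrak t(S)[\varphi,\psi]=c(\varphi,\psi)+(Q_c\varphi,Q_c\psi)$; companion relation $J_c=\{\{Q_c\varphi,\varphi'-c\varphi\}:\{\varphi,\varphi'\}\in S\}$; Kreĭn type extension $S_{{\rm K},c}=c+J_c^{**}J_c^*$. For a semibounded selfadjoint relation $H$, $\mathfrak t_H$ is its associated closed form (closure of $\mathfrak t(H)$). $\mathfrak t_1\le\mathfrak t_2$ means $\mathrm{dom}\,\mathfrak t_2\subset\mathrm{dom}\,\mathfrak t_1$ and $\mathfrak t_1[f,f]\le\mathfrak t_2[f,f]$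 on $\mathrm{dom}\,\mathfrak t_2$; $H\le K$ means $\mathfrak t_H\le\mathfrak t_K$; $c\le H$ means $(f',f)\ge c\|f\|^2$ for all $\{f,f'\}\in H$. *)

theory Defs
  imports "HOL-Analysis.Analysis" "HOL-Library.Complex_Order"
begin

class complex_vector = real_vector +
  fixes scaleC :: "complex \<Rightarrow> 'a \<Rightarrow> 'a"
  assumes scaleC_add_right: "scaleC a (x + y) = scaleC a x + scaleC a y"
    and scaleC_add_left: "scaleC (a + b) x = scaleC a x + scaleC b x"
    and scaleC_scaleC: "scaleC a (scaleC b x) = scaleC (a * b) x"
    and scaleC_one: "scaleC 1 x = x"
    and scaleR_scaleC: "scaleR r x = scaleC (complex_of_real r) x"

class complex_inner = complex_vector + real_normed_vector +
  fixes cinner :: "'a \<Rightarrow> 'a \<Rightarrow> complex"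
  assumes cinner_commute: "cinner x y = cnj (cinner y x)"
    and cinner_add_left: "cinner (x + y) z = cinner x z + cinner y z"
    and cinner_scaleC_left: "cinner (scaleC r x) y = r * cinner x y"
    and cinner_ge_zero: "0 \<le> Re (cinner x x)"
    and cinner_eq_zero_iff: "cinner x x = 0 \<longleftrightarrow> x = 0"
    and norm_eq_sqrt_cinner: "norm x = sqrt (Re (cinner x x))"

text \<open>A Hilbert space is a type of class \<open>{complex_inner, complete_space}\<close>.\<close>

definition is_lin_rel :: "('a::complex_vector \<times> 'b::complex_vector) set \<Rightarrow> bool" where
  "is_lin_rel T \<longleftrightarrow> (0, 0) \<in> T \<and>
     (\<forall>(f, g)\<in>T. \<forall>(f', g')\<in>T. (f + f', g + g') \<in> T) \<and>
     (\<forall>a. \<forall>(f, g)\<in>T. (scaleC a f, scaleC a g) \<in> T)"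

definition adj :: "('a::complex_inner \<times> 'b::complex_inner) set \<Rightarrow> ('b \<times> 'a) set" where
  "adj T = {(h, k). \<forall>(f, g)\<in>T. cinner g h = cinner f k}"

definition rel_comp :: "('b \<times> 'c) set \<Rightarrow> ('a \<times> 'b) set \<Rightarrow> ('a \<times> 'c) set" where
  "rel_comp R T = {(f, h). \<exists>g. (f, g) \<in> T \<and> (g, h) \<in> R}"

definition rel_shift :: "real \<Rightarrow> ('a::complex_vector \<times> 'a) set \<Rightarrow> ('a \<times> 'a) set" where
  "rel_shift c T = {(f, g + scaleC (complex_of_real c) f) | f g. (f, g) \<in> T}"

text \<open>\<open>c \<le> S\<close>: \<open>(\<phi>',\<phi>) \<ge> c \<parallel>\<phi>\<parallel>^2\<close> for all \<open>{\<phi>,\<phi>'} \<in> S\<close> (order on complex numbers: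
  real and greater or equal).\<close>
definition bounded_below_by :: "real \<Rightarrow> ('a::complex_inner \<times> 'a) set \<Rightarrow> bool" where
  "bounded_below_by c S \<longleftrightarrow>
     (\<forall>(\<phi>, \<phi>')\<in>S. complex_of_real (c * (norm \<phi>)\<^sup>2) \<le> cinner \<phi>' \<phi>)"

definition semibounded :: "('a::complex_inner \<times> 'a) set \<Rightarrow> bool" where
  "semibounded S \<longleftrightarrow> (\<exists>c. bounded_below_by c S)"

definition lower_bound :: "('a::complex_inner \<times> 'a) set \<Rightarrow> real \<Rightarrow> bool" where
  "lower_bound S \<gamma> \<longleftrightarrow>
     (\<forall>c. bounded_below_by c S \<longrightarrow> c \<le> \<gamma>) \<and>
     (\<forall>b. (\<forall>c. bounded_below_by c S \<longrightarrow> c \<le> b) \<longrightarrow> \<gamma> \<le> b)"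

definition selfadjoint :: "('a::complex_inner \<times> 'a) set \<Rightarrow> bool" where
  "selfadjoint H \<longleftrightarrow> is_lin_rel H \<and> adj H = H"

text \<open>\<open>Q\<close> is a representing map for \<open>t(S) - c\<close>: linear on \<open>dom S\<close> (its values off
  \<open>dom S\<close> are irrelevant) and \<open>t(S)[\<phi>,\<psi>] = (\<phi>',\<psi>) = c(\<phi>,\<psi>) + (Q\<phi>,Q\<psi>)\<close>.\<close>
definition representing_map ::
    "('a::complex_inner \<times> 'a) set \<Rightarrow> real \<Rightarrow> ('a \<Rightarrow> 'b::complex_inner) \<Rightarrow> bool" where
  "representing_map S c Q \<longleftrightarrow>
     (\<forall>x\<in>Domain S. \<forall>y\<in>Domain S. Q (x + y) = Q x + Q y) \<and>
     (\<forall>a. \<forall>x\<in>Domain S. Q (scaleC a x) = scaleC a (Q x)) \<and>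
     (\<forall>(\<phi>, \<phi>')\<in>S. \<forall>\<psi>\<in>Domain S.
        cinner \<phi>' \<psi> = complex_of_real c * cinner \<phi> \<psi> + cinner (Q \<phi>) (Q \<psi>))"

definition companion ::
    "('a::complex_inner \<times> 'a) set \<Rightarrow> real \<Rightarrow> ('a \<Rightarrow> 'b::complex_inner) \<Rightarrow> ('b \<times> 'a) set" where
  "companion S c Q = {(Q \<phi>, \<phi>' - scaleC (complex_of_real c) \<phi>) | \<phi> \<phi>'. (\<phi>, \<phi>') \<in> S}"

definition krein_ext ::
    "('a::complex_inner \<times> 'a) set \<Rightarrow> real \<Rightarrow> ('a \<Rightarrow> 'b::complex_inner) \<Rightarrow> ('a \<times> 'a) set" where
  "krein_ext S c Q =
     rel_shift c (rel_comp (adj (adj (companion S c Q))) (adj (companion S c Q)))"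

text \<open>\<open>t(H)[\<phi>] = (\<phi>',\<phi>)\<close>, \<open>{\<phi>,\<phi>'} \<in> H\<close> (independent of the choice of \<open>\<phi>'\<close>).\<close>
definition tq :: "('a::complex_inner \<times> 'a) set \<Rightarrow> 'a \<Rightarrow> complex" where
  "tq H \<phi> = cinner (SOME \<phi>'. (\<phi>, \<phi>') \<in> H) \<phi>"

definition form_approx :: "('a::{complex_inner} \<times> 'a) set \<Rightarrow> 'a \<Rightarrow> (nat \<Rightarrow> 'a) \<Rightarrow> bool" where
  "form_approx H f u \<longleftrightarrow> (\<forall>n. u n \<in> Domain H) \<and> u \<longlonglongrightarrow> f \<and>
     (\<forall>e>0. \<exists>N. \<forall>n\<ge>N. \<forall>m\<ge>N. cmod (tq H (u n - u m)) < e)"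

text \<open>Domain of the closure \<open>t_H\<close> of \<open>t(H)\<close>.\<close>
definition form_dom :: "('a::complex_inner \<times> 'a) set \<Rightarrow> 'a set" where
  "form_dom H = {f. \<exists>u. form_approx H f u}"

definition form_val :: "('a::complex_inner \<times> 'a) set \<Rightarrow> 'a \<Rightarrow> real" where
  "form_val H f = Re (lim (\<lambda>n. tq H ((SOME u. form_approx H f u) n)))"

definition form_le :: "('a::complex_inner \<times> 'a) set \<Rightarrow> ('a \<times> 'a) set \<Rightarrow> bool" where
  "form_le H K \<longleftrightarrow> form_dom K \<subseteq> form_dom H \<and> (\<forall>f\<in>form_dom K. form_val H f \<le> form_val K f)"

end

theory Submission
  imports Defs
begin


context complex_vector begin
lemma scaleC_zero_right[simp]: "scaleC a 0 = 0"
proof -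
  have "scaleC a 0 + scaleC a 0 = scaleC a (0 + 0)" by (rule scaleC_add_right[symmetric])
  hence "scaleC a 0 + scaleC a 0 = scaleC a 0" by (simp only: add_0)
  thus ?thesis by (simp only: add_cancel_left_right)
qed
lemma scaleC_zero_left[simp]: "scaleC 0 x = 0"
proof -
  have "scaleC 0 x + scaleC 0 x = scaleC (0 + 0) x" by (rule scaleC_add_left[symmetric])
  also have "scaleC (0 + 0) x = scaleC 0 x" by simp
  finally have "scaleC 0 x + scaleC 0 x = scaleC 0 x" .
  thus ?thesis by (simp only: add_cancel_left_right)
qed
lemma scaleC_minus_right: "scaleC a (- x) = - scaleC a x"
proof -
  have "scaleC a x + scaleC a (- x) = scaleC a (x + - x)" by (rule scaleC_add_right[symmetric])
  hence "scaleC a x + scaleC a (- x) = 0" by (simp only: add.right_inverse scaleC_zero_right)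
  thus ?thesis by (rule minus_unique[symmetric])
qed
lemma scaleC_diff_right: "scaleC a (x - y) = scaleC a x - scaleC a y"
  by (simp only: diff_conv_add_uminus scaleC_add_right scaleC_minus_right)
lemma scaleC_minus_left: "scaleC (- a) x = - scaleC a x"
proof -
  have "scaleC a x + scaleC (- a) x = scaleC (a + - a) x" by (rule scaleC_add_left[symmetric])
  also have "\<dots> = 0" by simp
  finally show ?thesis by (rule minus_unique[symmetric])
qed
lemma scaleC_diff_left: "scaleC (a - b) x = scaleC a x - scaleC b x"
proof -
  have "scaleC (a - b) x = scaleC (a + - b) x" by simp
  also have "\<dots> = scaleC a x + - scaleC b x" by (simp only: scaleC_add_left scaleC_minus_left)
  finally show ?thesis by (simp only: diff_conv_add_uminus)
qed
end

lemma cinner_zero_left[simp]: "cinner 0 (y::'a::complex_inner) = 0"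
proof -
  have "cinner 0 y + cinner 0 y = cinner (0 + 0) y" by (rule cinner_add_left[symmetric])
  hence "cinner 0 y + cinner 0 y = cinner 0 y" by (simp only: add_0_left)
  thus ?thesis by (simp only: add_cancel_left_right)
qed
lemma cinner_zero_right[simp]: "cinner (x::'a::complex_inner) 0 = 0"
  by (subst cinner_commute) simp
lemma cinner_add_right: fixes x :: "'a::complex_inner" shows "cinner x (y + z) = cinner x y + cinner x z"
proof -
  have "cinner x (y + z) = cnj (cinner (y + z) x)" by (rule cinner_commute)
  also have "\<dots> = cnj (cinner y x) + cnj (cinner z x)" by (simp only: cinner_add_left complex_cnj_add)
  also have "\<dots> = cinner x y + cinner x z" by (simp only: cinner_commute[of x y] cinner_commute[of x z])
  finally show ?thesis .
qed
lemma cinner_scaleC_right: fixes x :: "'a::complex_inner" shows "cinner x (scaleC r y) = cnj r * cinner x y"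
proof -
  have "cinner x (scaleC r y) = cnj (cinner (scaleC r y) x)" by (rule cinner_commute)
  also have "\<dots> = cnj r * cnj (cinner y x)" by (simp only: cinner_scaleC_left complex_cnj_mult)
  also have "\<dots> = cnj r * cinner x y" by (simp only: cinner_commute[of x y])
  finally show ?thesis .
qed
lemma cinner_minus_left: fixes x :: "'a::complex_inner" shows "cinner (- x) y = - cinner x y"
proof -
  have "cinner x y + cinner (- x) y = cinner (x + - x) y" by (rule cinner_add_left[symmetric])
  also have "\<dots> = 0" by simp
  finally show ?thesis by (rule minus_unique[symmetric])
qed
lemma cinner_minus_right: fixes x :: "'a::complex_inner" shows "cinner x (- y) = - cinner x y"
proof -
  have "cinner x y + cinner x (- y) = cinner x (y + - y)" by (rule cinner_add_right[symmetric])
  also have "\<dots> = 0" by simp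
  finally show ?thesis by (rule minus_unique[symmetric])
qed
lemma cinner_diff_left: fixes x :: "'a::complex_inner" shows "cinner (x - y) z = cinner x z - cinner y z"
  by (simp only: diff_conv_add_uminus cinner_add_left cinner_minus_left)
lemma cinner_diff_right: fixes x :: "'a::complex_inner" shows "cinner x (y - z) = cinner x y - cinner x z"
  by (simp only: diff_conv_add_uminus cinner_add_right cinner_minus_right)
lemma Im_cinner_self: fixes x :: "'a::complex_inner" shows "Im (cinner x x) = 0"
proof -
  have "cinner x x = cnj (cinner x x)" by (rule cinner_commute)
  hence "Im (cinner x x) = Im (cnj (cinner x x))" by (rule arg_cong)
  thus ?thesis by simp
qed
lemma Re_cinner_self: fixes x :: "'a::complex_inner" shows "Re (cinner x x) = (norm x)\<^sup>2"
  using cinner_ge_zero[of x] by (simp add: norm_eq_sqrt_cinner)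
lemma cinner_self_norm: fixes x :: "'a::complex_inner" shows "cinner x x = complex_of_real ((norm x)\<^sup>2)"
  using Re_cinner_self[of x] Im_cinner_self[of x] by (simp add: complex_eq_iff)

lemma scaleC_of_real: fixes x :: "'a::complex_vector" shows "scaleC (complex_of_real r) x = scaleR r x"
  by (simp add: scaleR_scaleC)

lemma norm_add_scaleC_sq:
  fixes x y :: "'a::complex_inner"
  shows "(norm (x + scaleC t y))\<^sup>2 = (norm x)\<^sup>2 + 2 * Re (t * cinner y x) + (cmod t)\<^sup>2 * (norm y)\<^sup>2"
proof -
  have "cinner (x + scaleC t y) (x + scaleC t y) =
        cinner x x + (t * cinner y x + cnj (t * cinner y x)) + t * cnj t * cinner y y"
    by (simp add: cinner_add_left cinner_add_right cinner_scaleC_left cinner_scaleC_right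
        cinner_commute[of x y] algebra_simps)
  hence "Re (cinner (x + scaleC t y) (x + scaleC t y)) =
        Re (cinner x x) + 2 * Re (t * cinner y x) + (cmod t)\<^sup>2 * Re (cinner y y)"
    by (simp add: complex_mult_cnj cmod_def power2_eq_square)
  thus ?thesis by (simp add: Re_cinner_self)
qed

lemma quad_cs:
  fixes a b :: real and z :: complex
  assumes "a \<ge> 0" "b \<ge> 0" and H: "\<And>t. 0 \<le> a + 2 * Re (t * z) + (cmod t)\<^sup>2 * b"
  shows "(cmod z)\<^sup>2 \<le> a * b"
proof (cases "b > 0")
  case True
  define t where "t = - cnj z / complex_of_real b"
  have zz: "cnj z * z = complex_of_real ((cmod z)\<^sup>2)" by (subst complex_norm_square) (rule mult.commute)
  have tz: "t * z = - complex_of_real ((cmod z)\<^sup>2 / b)"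
    unfolding t_def by (simp only: mult_minus_left times_divide_eq_left zz of_real_divide minus_divide_left)
  have ct: "(cmod t)\<^sup>2 = (cmod z)\<^sup>2 / b\<^sup>2"
    unfolding t_def using True by (simp add: norm_divide power_divide)
  have "0 \<le> a + 2 * (- ((cmod z)\<^sup>2 / b)) + (cmod z)\<^sup>2 / b\<^sup>2 * b"
    using H[of t] by (simp add: tz ct)
  also have "(cmod z)\<^sup>2 / b\<^sup>2 * b = (cmod z)\<^sup>2 / b" using True by (simp add: power2_eq_square)
  finally have "0 \<le> a - (cmod z)\<^sup>2 / b" by simp
  hence "(cmod z)\<^sup>2 / b \<le> a" by simp
  thus ?thesis using True by (simp add: divide_le_eq mult.commute)
next
  case False
  hence b0: "b = 0" using assms(2) by simp
  show ?thesis
  proof (rule ccontr)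
    assume "\<not> ?thesis"
    hence zp: "(cmod z)\<^sup>2 > 0" using b0 by simp
    define s where "s = (a + 1) / (2 * (cmod z)\<^sup>2)"
    define t where "t = - complex_of_real s * cnj z"
    have zz: "cnj z * z = complex_of_real ((cmod z)\<^sup>2)" by (subst complex_norm_square) (rule mult.commute)
    have tz: "t * z = - complex_of_real (s * (cmod z)\<^sup>2)"
      unfolding t_def by (simp only: mult_minus_left mult.assoc zz of_real_mult)
    have "0 \<le> a + 2 * (- (s * (cmod z)\<^sup>2))" using H[of t] b0 by (simp add: tz)
    also have "s * (cmod z)\<^sup>2 = (a + 1) / 2" unfolding s_def using zp by simp
    finally show False by simp
  qed
qed

lemma cinner_cs:
  fixes x y :: "'a::complex_inner"
  shows "cmod (cinner x y) \<le> norm x * norm y"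
proof -
  have "(cmod (cinner y x))\<^sup>2 \<le> (norm x)\<^sup>2 * (norm y)\<^sup>2"
  proof (rule quad_cs)
    fix t
    have "0 \<le> (norm (x + scaleC t y))\<^sup>2" by simp
    thus "0 \<le> (norm x)\<^sup>2 + 2 * Re (t * cinner y x) + (cmod t)\<^sup>2 * (norm y)\<^sup>2"
      by (simp only: norm_add_scaleC_sq)
  qed simp_all
  hence "(cmod (cinner y x))\<^sup>2 \<le> (norm x * norm y)\<^sup>2" by (simp add: power_mult_distrib)
  hence "cmod (cinner y x) \<le> norm x * norm y"
    by (rule power2_le_imp_le) simp
  moreover have "cmod (cinner x y) = cmod (cinner y x)"
    by (subst cinner_commute) simp
  ultimately show ?thesis by simp
qed

lemma bounded_bilinear_cinner: "bounded_bilinear (cinner :: 'a::complex_inner \<Rightarrow> 'a \<Rightarrow> complex)"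
proof
  fix a a' b b' :: 'a and r :: real
  show "cinner (a + a') b = cinner a b + cinner a' b" by (rule cinner_add_left)
  show "cinner a (b + b') = cinner a b + cinner a b'" by (rule cinner_add_right)
  show "cinner (r *\<^sub>R a) b = r *\<^sub>R cinner a b"
    by (simp add: scaleR_scaleC cinner_scaleC_left scaleR_conv_of_real)
  show "cinner a (r *\<^sub>R b) = r *\<^sub>R cinner a b"
    by (simp add: scaleR_scaleC cinner_scaleC_right scaleR_conv_of_real)
next
  show "\<exists>K. \<forall>a b. norm (cinner (a::'a) b) \<le> norm a * norm b * K"
    by (rule exI[of _ 1]) (simp add: cinner_cs)
qed

lemmas tendsto_cinner = bounded_bilinear.tendsto[OF bounded_bilinear_cinner]

instantiation prod :: (complex_vector, complex_vector) complex_vector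
begin
definition scaleC_prod_def: "scaleC a x = (scaleC a (fst x), scaleC a (snd x))"
instance
proof
  fix a b :: complex and x y :: "'a \<times> 'b" and r :: real
  show "scaleC a (x + y) = scaleC a x + scaleC a y"
    by (simp add: scaleC_prod_def scaleC_add_right)
  show "scaleC (a + b) x = scaleC a x + scaleC b x"
    by (simp add: scaleC_prod_def scaleC_add_left)
  show "scaleC a (scaleC b x) = scaleC (a * b) x"
    by (simp add: scaleC_prod_def scaleC_scaleC)
  show "scaleC 1 x = x"
    by (simp add: scaleC_prod_def scaleC_one)
  show "r *\<^sub>R x = scaleC (complex_of_real r) x"
    by (simp add: scaleC_prod_def scaleR_prod_def scaleR_scaleC)
qed
end

lemma scaleC_Pair[simp]: "scaleC a (x, y) = (scaleC a x, scaleC a y)"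
  by (simp add: scaleC_prod_def)

instantiation prod :: (complex_inner, complex_inner) complex_inner
begin
definition cinner_prod_def: "cinner x y = cinner (fst x) (fst y) + cinner (snd x) (snd y)"
instance
proof
  fix x y z :: "'a \<times> 'b" and r :: complex
  show "cinner x y = cnj (cinner y x)"
    by (simp add: cinner_prod_def cinner_commute[of "fst x"] cinner_commute[of "snd x"])
  show "cinner (x + y) z = cinner x z + cinner y z"
    by (simp add: cinner_prod_def cinner_add_left)
  show "cinner (scaleC r x) y = r * cinner x y"
    by (simp add: cinner_prod_def scaleC_prod_def cinner_scaleC_left algebra_simps)
  show "0 \<le> Re (cinner x x)"
    by (simp add: cinner_prod_def Re_cinner_self)
  show "(cinner x x = 0) = (x = 0)"
  proof
    assume "cinner x x = 0"
    hence "Re (cinner x x) = 0" by simp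
    hence "(norm (fst x))\<^sup>2 + (norm (snd x))\<^sup>2 = 0" by (simp add: cinner_prod_def Re_cinner_self)
    hence "fst x = 0 \<and> snd x = 0"
      by (metis add_nonneg_eq_0_iff norm_eq_zero power_eq_0_iff zero_le_power2)
    thus "x = 0" by (simp add: prod_eq_iff)
  qed (simp add: cinner_prod_def)
  show "norm x = sqrt (Re (cinner x x))"
    by (simp add: cinner_prod_def Re_cinner_self norm_prod_def)
qed
end

lemma cinner_Pair[simp]: "cinner (a, b) (c, d) = cinner a c + cinner b d"
  by (simp add: cinner_prod_def)

lemma cauchy_conv:
  fixes x :: "nat \<Rightarrow> 'x::{real_normed_vector, complete_space}"
  assumes "\<And>e. e > 0 \<Longrightarrow> \<exists>N. \<forall>n\<ge>N. \<forall>m\<ge>N. norm (x n - x m) < e"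
  shows "\<exists>k. x \<longlonglongrightarrow> k"
proof -
  have "Cauchy x" unfolding Cauchy_def dist_norm using assms by blast
  hence "convergent x" by (simp add: Cauchy_convergent_iff)
  thus ?thesis by (simp add: convergent_def)
qed

lemma parallelogram:
  fixes x y :: "'a::complex_inner"
  shows "(norm (x + y))\<^sup>2 + (norm (x - y))\<^sup>2 = 2 * (norm x)\<^sup>2 + 2 * (norm y)\<^sup>2"
proof -
  have a: "(norm (x + scaleC 1 y))\<^sup>2 = (norm x)\<^sup>2 + 2 * Re (1 * cinner y x) + (cmod 1)\<^sup>2 * (norm y)\<^sup>2"
    by (rule norm_add_scaleC_sq)
  have b: "(norm (x + scaleC (-1) y))\<^sup>2 = (norm x)\<^sup>2 + 2 * Re ((-1) * cinner y x) + (cmod (-1))\<^sup>2 * (norm y)\<^sup>2"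
    by (rule norm_add_scaleC_sq)
  have "scaleC (-1) y = - y" by (simp add: scaleC_minus_left scaleC_one)
  hence "x + scaleC (-1) y = x - y" by simp
  with a b show ?thesis by (simp add: scaleC_one)
qed

lemma riesz_gen:
  fixes R :: "('x::{complex_inner, complete_space} \<times> complex) set" and C :: real
  assumes R0: "(0, 0) \<in> R"
    and Radd: "\<And>q z q' z'. (q, z) \<in> R \<Longrightarrow> (q', z') \<in> R \<Longrightarrow> (q + q', z + z') \<in> R"
    and Rsc: "\<And>a q z. (q, z) \<in> R \<Longrightarrow> (scaleC a q, a * z) \<in> R"
    and C0: "C \<ge> 0"
    and bnd: "\<And>q z. (q, z) \<in> R \<Longrightarrow> cmod z \<le> C * norm q"
  shows "\<exists>k. (\<exists>s. (\<forall>n. s n \<in> Domain R) \<and> s \<longlonglongrightarrow> k) \<and> (\<forall>(q, z)\<in>R. cinner q k = z) \<and> norm k \<le> C"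
proof -
  define F where "F = (\<lambda>p::'x \<times> complex. (norm (fst p))\<^sup>2 - 2 * Re (snd p))"
  have Flow: "F p \<ge> - C\<^sup>2" if "p \<in> R" for p
  proof -
    obtain q z where p: "p = (q, z)" by force
    have "Re z \<le> cmod z" by (rule complex_Re_le_cmod)
    also have "\<dots> \<le> C * norm q" using bnd that p by simp
    finally have "Re z \<le> C * norm q" .
    moreover have "0 \<le> (norm q - C)\<^sup>2" by simp
    ultimately show ?thesis unfolding F_def p by (simp add: power2_diff algebra_simps)
  qed
  define d where "d = Inf (F ` R)"
  have bdd: "bdd_below (F ` R)" using Flow by (auto intro!: bdd_belowI[of _ "- C\<^sup>2"])
  have ne: "F ` R \<noteq> {}" using R0 by auto
  have dle: "d \<le> F p" if "p \<in> R" for p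
    unfolding d_def using bdd that by (simp add: cInf_lower)
  have "\<exists>p. p \<in> R \<and> F p < d + 1 / real (Suc n)" for n
  proof -
    have "Inf (F ` R) < d + 1 / real (Suc n)" unfolding d_def by simp
    then obtain v where "v \<in> F ` R" "v < d + 1 / real (Suc n)"
      using cInf_lessD[OF ne] by blast
    thus ?thesis by auto
  qed
  then obtain p where pR: "\<And>n. p n \<in> R" and pF: "\<And>n. F (p n) < d + 1 / real (Suc n)"
    by metis
  define q where "q = (\<lambda>n. fst (p n))"
  define z where "z = (\<lambda>n. snd (p n))"
  have qzR: "(q n, z n) \<in> R" for n using pR[of n] by (simp add: q_def z_def)
  have Fn: "(norm (q n))\<^sup>2 - 2 * Re (z n) < d + 1 / real (Suc n)" for n
    using pF[of n] by (simp add: F_def q_def z_def)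
  have dlow: "d \<le> (norm a)\<^sup>2 - 2 * Re b" if "(a, b) \<in> R" for a b
    using dle[OF that] by (simp add: F_def)
  have qdiff: "(norm (q n - q m))\<^sup>2 \<le> 2 * (1 / real (Suc n) + 1 / real (Suc m))" for n m
  proof -
    have mid: "(scaleC (1/2) (q n + q m), (1/2) * (z n + z m)) \<in> R"
      by (rule Rsc, rule Radd, rule qzR, rule qzR)
    have "scaleC (1/2) (q n + q m) = (1/2::real) *\<^sub>R (q n + q m)"
      by (simp add: scaleR_scaleC)
    hence nm: "(norm (scaleC (1/2) (q n + q m)))\<^sup>2 = (norm (q n + q m))\<^sup>2 / 4"
      by (simp add: power2_eq_square)
    have d1: "d \<le> (norm (scaleC (1/2) (q n + q m)))\<^sup>2 - 2 * Re ((1/2) * (z n + z m))"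
      by (rule dlow[OF mid])
    have eqRe: "2 * Re ((1/2) * (z n + z m)) = Re (z n) + Re (z m)" by simp
    from d1 have "d \<le> (norm (q n + q m))\<^sup>2 / 4 - (Re (z n) + Re (z m))"
      unfolding nm eqRe .
    moreover note Fn[of n] Fn[of m] parallelogram[of "q n" "q m"]
    ultimately show ?thesis unfolding distrib_left by linarith
  qed
  have "\<exists>k. q \<longlonglongrightarrow> k"
  proof (rule cauchy_conv)
    fix e :: real assume e: "e > 0"
    obtain N :: nat where N: "4 / e\<^sup>2 < real N" using reals_Archimedean2 by blast
    have "\<forall>n\<ge>N. \<forall>m\<ge>N. norm (q n - q m) < e"
    proof (intro allI impI)
      fix n m assume nm: "n \<ge> N" "m \<ge> N"
      have e2: "e\<^sup>2 > 0" using e by simp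
      have "4 / e\<^sup>2 > 0" using e2 by simp
      hence Np: "real N > 0" using N by linarith
      have "1 / real (Suc n) \<le> 1 / real N" using nm Np by (simp add: frac_le)
      moreover have "1 / real (Suc m) \<le> 1 / real N" using nm Np by (simp add: frac_le)
      ultimately have "(norm (q n - q m))\<^sup>2 \<le> 4 / real N" using qdiff[of n m] by simp
      also have "4 / real N < e\<^sup>2" using N e2 Np by (simp add: divide_less_eq mult.commute)
      finally have "(norm (q n - q m))\<^sup>2 < e\<^sup>2" .
      thus "norm (q n - q m) < e" using e by (simp add: power_less_imp_less_base)
    qed
    thus "\<exists>N. \<forall>n\<ge>N. \<forall>m\<ge>N. norm (q n - q m) < e" by blast
  qed
  then obtain k where qk: "q \<longlonglongrightarrow> k" by blast
  have repr: "cinner y k = w" if yw: "(y, w) \<in> R" for y w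
  proof -
    have "(cmod (cinner y k - w))\<^sup>2 \<le> 0 * (norm y)\<^sup>2"
    proof (rule quad_cs)
      fix t :: complex
      have ineq: "0 \<le> 2 * Re (t * (cinner y (q n) - w)) + (cmod t)\<^sup>2 * (norm y)\<^sup>2 + 1 / real (Suc n)" for n
      proof -
        have "(q n + scaleC t y, z n + t * w) \<in> R" by (rule Radd[OF qzR Rsc[OF yw]])
        hence "d \<le> (norm (q n + scaleC t y))\<^sup>2 - 2 * Re (z n + t * w)" by (rule dlow)
        also have "\<dots> = (norm (q n))\<^sup>2 + 2 * Re (t * cinner y (q n)) + (cmod t)\<^sup>2 * (norm y)\<^sup>2
              - 2 * Re (z n) - 2 * Re (t * w)"
          by (simp add: norm_add_scaleC_sq)
        finally have dd: "d \<le> (norm (q n))\<^sup>2 + 2 * Re (t * cinner y (q n)) + (cmod t)\<^sup>2 * (norm y)\<^sup>2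
              - 2 * Re (z n) - 2 * Re (t * w)" .
        have e: "Re (t * (cinner y (q n) - w)) = Re (t * cinner y (q n)) - Re (t * w)"
          by (simp add: right_diff_distrib)
        show ?thesis using dd Fn[of n] unfolding e unfolding right_diff_distrib by linarith
      qed
      have l1: "(\<lambda>n. cinner y (q n)) \<longlonglongrightarrow> cinner y k" by (rule tendsto_cinner[OF tendsto_const qk])
      have l2: "(\<lambda>n. 1 / real (Suc n)) \<longlonglongrightarrow> 0"
        using LIMSEQ_inverse_real_of_nat unfolding inverse_eq_divide .
      have lim: "(\<lambda>n. 2 * Re (t * (cinner y (q n) - w)) + (cmod t)\<^sup>2 * (norm y)\<^sup>2 + 1 / real (Suc n))
          \<longlonglongrightarrow> 2 * Re (t * (cinner y k - w)) + (cmod t)\<^sup>2 * (norm y)\<^sup>2 + 0"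
        by (intro tendsto_add tendsto_mult tendsto_Re tendsto_diff tendsto_const l1 l2)
      have ev: "\<exists>N. \<forall>n\<ge>N. 0 \<le> 2 * Re (t * (cinner y (q n) - w)) + (cmod t)\<^sup>2 * (norm y)\<^sup>2 + 1 / real (Suc n)"
        using ineq by blast
      have "0 \<le> 2 * Re (t * (cinner y k - w)) + (cmod t)\<^sup>2 * (norm y)\<^sup>2 + 0"
        by (rule LIMSEQ_le_const[OF lim ev])
      thus "0 \<le> 0 + 2 * Re (t * (cinner y k - w)) + (cmod t)\<^sup>2 * (norm y)\<^sup>2" by simp
    qed simp_all
    hence "(cmod (cinner y k - w))\<^sup>2 \<le> 0" by simp
    hence "cmod (cinner y k - w) = 0" by (simp only: power2_less_eq_zero_iff norm_eq_zero)
    thus ?thesis by simp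
  qed
  have zlim: "z \<longlonglongrightarrow> cinner k k"
  proof -
    have "(\<lambda>n. cinner (q n) k) \<longlonglongrightarrow> cinner k k" by (intro tendsto_cinner qk tendsto_const)
    moreover have "(\<lambda>n. cinner (q n) k) = z" using repr[OF qzR] by (simp add: fun_eq_iff)
    ultimately show ?thesis by simp
  qed
  have "cmod (cinner k k) \<le> C * norm k"
  proof (rule tendsto_le[OF sequentially_bot])
    show "(\<lambda>n. C * norm (q n)) \<longlonglongrightarrow> C * norm k" by (intro tendsto_intros qk)
    show "(\<lambda>n. cmod (z n)) \<longlonglongrightarrow> cmod (cinner k k)" by (intro tendsto_intros zlim)
    show "\<forall>\<^sub>F n in sequentially. cmod (z n) \<le> C * norm (q n)" using bnd[OF qzR] by simp
  qed
  moreover have "cmod (cinner k k) = (norm k)\<^sup>2"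
    by (simp only: cinner_self_norm norm_of_real abs_power2 abs_norm_cancel)
  ultimately have "(norm k)\<^sup>2 \<le> C * norm k" by simp
  hence nk: "norm k \<le> C"
  proof (cases "norm k = 0")
    case True thus ?thesis using C0 by simp
  next
    case False
    hence pos: "norm k > 0" by simp
    assume "(norm k)\<^sup>2 \<le> C * norm k"
    hence "norm k * norm k \<le> C * norm k" by (simp add: power2_eq_square)
    thus ?thesis using pos by (rule mult_right_le_imp_le)
  qed
  have "\<forall>n. q n \<in> Domain R" using qzR by (auto intro: DomainI)
  with qk repr nk show ?thesis by blast
qed



lemma adj_iff: "(h, k) \<in> adj R \<longleftrightarrow> (\<forall>f g. (f, g) \<in> R \<longrightarrow> cinner g h = cinner f k)"
  by (auto simp: adj_def)

lemma adjD: "(h, k) \<in> adj R \<Longrightarrow> (f, g) \<in> R \<Longrightarrow> cinner g h = cinner f k"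
  by (auto simp: adj_def)

lemma adj_zero: "(0, 0) \<in> adj R"
  by (simp add: adj_iff)

lemma adj_add: "(h, k) \<in> adj R \<Longrightarrow> (h', k') \<in> adj R \<Longrightarrow> (h + h', k + k') \<in> adj R"
  by (simp add: adj_iff cinner_add_right)

lemma adj_scale: "(h, k) \<in> adj R \<Longrightarrow> (scaleC a h, scaleC a k) \<in> adj R"
  by (simp add: adj_iff cinner_scaleC_right)

lemma adj_minus: "(h, k) \<in> adj R \<Longrightarrow> (- h, - k) \<in> adj R"
  by (simp add: adj_iff cinner_minus_right)

lemma adj_diff: "(h, k) \<in> adj R \<Longrightarrow> (h', k') \<in> adj R \<Longrightarrow> (h - h', k - k') \<in> adj R"
  by (simp add: adj_iff cinner_diff_right)

lemma adj_closed:
  assumes "\<And>n. (h n, k n) \<in> adj R" "h \<longlonglongrightarrow> a" "k \<longlonglongrightarrow> b"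
  shows "(a, b) \<in> adj R"
proof (unfold adj_iff, intro allI impI)
  fix f g assume fg: "(f, g) \<in> R"
  have l1: "(\<lambda>n. cinner g (h n)) \<longlonglongrightarrow> cinner g a" by (rule tendsto_cinner[OF tendsto_const assms(2)])
  have l2: "(\<lambda>n. cinner f (k n)) \<longlonglongrightarrow> cinner f b" by (rule tendsto_cinner[OF tendsto_const assms(3)])
  have "(\<lambda>n. cinner g (h n)) = (\<lambda>n. cinner f (k n))" using adjD[OF assms(1) fg] by (simp add: fun_eq_iff)
  with l1 l2 show "cinner g a = cinner f b" using LIMSEQ_unique by metis
qed

lemma adj_closed_prod:
  assumes "\<And>n. s n \<in> adj R" "s \<longlonglongrightarrow> p"
  shows "p \<in> adj R"
proof -
  have "(fst p, snd p) \<in> adj R"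
    by (rule adj_closed[of "\<lambda>n. fst (s n)" "\<lambda>n. snd (s n)"])
      (use assms in \<open>auto intro: tendsto_fst tendsto_snd\<close>)
  thus ?thesis by simp
qed

lemma mul_perp_dom_adj: "(0, m) \<in> T \<Longrightarrow> (\<kappa>, \<gamma>) \<in> adj T \<Longrightarrow> cinner m \<kappa> = 0"
  using adjD[of \<kappa> \<gamma> T 0 m] by simp

lemma krein_mem:
  "(y, g) \<in> rel_shift c (rel_comp (adj T) T) \<longleftrightarrow>
     (\<exists>k g0. (y, k) \<in> T \<and> (k, g0) \<in> adj T \<and> g = g0 + scaleC (complex_of_real c) y)"
  by (auto simp: rel_shift_def rel_comp_def)

lemma krein_tq:
  fixes T :: "('a::complex_inner \<times> 'b::complex_inner) set"
  assumes "(y, k) \<in> T" "(k, g0) \<in> adj T"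
  shows "tq (rel_shift c (rel_comp (adj T) T)) y = cinner k k + complex_of_real c * cinner y y"
proof -
  let ?K = "rel_shift c (rel_comp (adj T) T)"
  have ex: "\<exists>g. (y, g) \<in> ?K" using assms by (auto simp: krein_mem)
  define g where "g = (SOME g. (y, g) \<in> ?K)"
  have "(y, g) \<in> ?K" unfolding g_def using someI_ex[OF ex] .
  then obtain k2 g2 where k2: "(y, k2) \<in> T" "(k2, g2) \<in> adj T" and g: "g = g2 + scaleC (complex_of_real c) y"
    by (auto simp: krein_mem)
  have "cinner k k2 = cinner y g2" using adjD[OF k2(2) assms(1)] .
  hence a: "cinner g2 y = cinner k2 k" by (metis cinner_commute)
  have b: "cinner k2 k = cinner y g0" using adjD[OF assms(2) k2(1)] .
  have c: "cinner k k = cinner y g0" using adjD[OF assms(2) assms(1)] .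
  have "tq ?K y = cinner g y" unfolding tq_def g_def ..
  also have "\<dots> = cinner g2 y + complex_of_real c * cinner y y"
    by (simp add: g cinner_add_left cinner_scaleC_left)
  finally show ?thesis using a b c by simp
qed

lemma adj_pair_add: "p \<in> adj R \<Longrightarrow> p' \<in> adj R \<Longrightarrow> p + p' \<in> adj R"
  using adj_add[of "fst p" "snd p" R "fst p'" "snd p'"] by (cases p, cases p') simp
lemma adj_pair_scale: "p \<in> adj R \<Longrightarrow> scaleC a p \<in> adj R"
  using adj_scale[of "fst p" "snd p" R a] by (cases p) simp
lemma adj_pair_diff: "p \<in> adj R \<Longrightarrow> p' \<in> adj R \<Longrightarrow> p - p' \<in> adj R"
  using adj_diff[of "fst p" "snd p" R "fst p'" "snd p'"] by (cases p, cases p') simp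
lemma adj_pair_zero: "(0::'a::complex_inner \<times> 'b::complex_inner) \<in> adj R"
  using adj_zero[of R] by (simp add: zero_prod_def)

lemma von_neumann:
  fixes J :: "('b::{complex_inner,complete_space} \<times> 'a::{complex_inner,complete_space}) set"
  defines "T \<equiv> adj J"
  shows "\<exists>y k. (y, k) \<in> T \<and> (k, x - y) \<in> adj T"
proof -
  define R where "R = {(p, cinner p (x, 0::'b)) | p. p \<in> T}"
  have "\<exists>k0. (\<exists>s. (\<forall>n. s n \<in> Domain R) \<and> s \<longlonglongrightarrow> k0) \<and> (\<forall>(q, z)\<in>R. cinner q k0 = z) \<and> norm k0 \<le> norm (x, 0::'b)"
  proof (rule riesz_gen)
    show "(0, 0) \<in> R" unfolding R_def T_def using adj_pair_zero[of J] by (auto intro!: exI[of _ 0] simp: zero_prod_def)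
    show "(q + q', z + z') \<in> R" if "(q, z) \<in> R" "(q', z') \<in> R" for q z q' z'
    proof -
      from that have a: "q \<in> T" "z = cinner q (x, 0::'b)" "q' \<in> T" "z' = cinner q' (x, 0::'b)"
        unfolding R_def by auto
      have "q + q' \<in> T" using a unfolding T_def by (blast intro: adj_pair_add)
      hence "(q + q', cinner (q + q') (x, 0::'b)) \<in> R" unfolding R_def by blast
      thus ?thesis using a by (simp only: cinner_add_left)
    qed
    show "(scaleC a q, a * z) \<in> R" if "(q, z) \<in> R" for a q z
    proof -
      from that have b: "q \<in> T" "z = cinner q (x, 0::'b)" unfolding R_def by auto
      have "scaleC a q \<in> T" using b unfolding T_def by (blast intro: adj_pair_scale)
      hence "(scaleC a q, cinner (scaleC a q) (x, 0::'b)) \<in> R" unfolding R_def by blast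
      thus ?thesis using b by (simp only: cinner_scaleC_left)
    qed
    show "cmod z \<le> norm (x, 0::'b) * norm q" if "(q, z) \<in> R" for q z
    proof -
      from that have "z = cinner q (x, 0::'b)" unfolding R_def by auto
      thus ?thesis using cinner_cs[of q "(x, 0::'b)"] by (simp only: mult.commute)
    qed
  qed (rule norm_ge_zero)
  then obtain k0 where ex: "\<exists>s. (\<forall>n. s n \<in> Domain R) \<and> s \<longlonglongrightarrow> k0" and rep0: "\<forall>(q, z)\<in>R. cinner q k0 = z"
    by blast
  from ex obtain s where s: "\<And>n. s n \<in> Domain R" "s \<longlonglongrightarrow> k0" by blast
  have rep: "cinner q k0 = z" if "(q, z) \<in> R" for q z using bspec[OF rep0 that] by simp
  have sT: "s n \<in> T" for n using s(1)[of n] unfolding R_def by auto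
  have "k0 \<in> T" unfolding T_def by (rule adj_closed_prod[OF sT[unfolded T_def] s(2)])
  obtain y k where k0: "k0 = (y, k)" by (cases k0) blast
  have rep2: "cinner a y + cinner b k = cinner a x" if "(a, b) \<in> T" for a b
    using rep[of "(a, b)" "cinner (a, b) (x, 0::'b)"] that unfolding R_def k0 by auto
  have "(k, x - y) \<in> adj T"
  proof (unfold adj_iff, intro allI impI)
    fix f g assume "(f, g) \<in> T"
    from rep2[OF this] show "cinner g k = cinner f (x - y)"
      by (simp add: cinner_diff_right algebra_simps)
  qed
  with \<open>k0 \<in> T\<close> k0 show ?thesis by blast
qed

lemma density:
  fixes J :: "('b::{complex_inner,complete_space} \<times> 'a::{complex_inner,complete_space}) set"
  defines "T \<equiv> adj J"
  assumes fk: "(f, k) \<in> T" and perp: "\<And>m. (0, m) \<in> T \<Longrightarrow> cinner m k = 0"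
  shows "\<exists>y \<kappa> \<gamma>. (\<forall>n. (y n, \<kappa> n) \<in> T \<and> (\<kappa> n, \<gamma> n) \<in> adj T) \<and> y \<longlonglongrightarrow> f \<and> \<kappa> \<longlonglongrightarrow> k"
proof -
  define D where "D = {p. p \<in> T \<and> snd p \<in> Domain (adj T)}"
  define R where "R = {(p, cinner p (f, k)) | p. p \<in> D}"
  have Dadd: "p + p' \<in> D" if "p \<in> D" "p' \<in> D" for p p'
  proof -
    from that obtain g g' where "(snd p, g) \<in> adj T" "(snd p', g') \<in> adj T" unfolding D_def by auto
    hence "(snd p + snd p', g + g') \<in> adj T" by (rule adj_add)
    thus ?thesis using that unfolding D_def T_def by (auto intro: adj_pair_add)
  qed
  have Dsc: "scaleC a p \<in> D" if "p \<in> D" for a p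
  proof -
    from that obtain g where "(snd p, g) \<in> adj T" unfolding D_def by auto
    hence "(scaleC a (snd p), scaleC a g) \<in> adj T" by (rule adj_scale)
    moreover have "scaleC a p \<in> T" unfolding T_def
      by (rule adj_pair_scale) (use that in \<open>simp add: D_def T_def\<close>)
    ultimately show ?thesis unfolding D_def by (cases p) auto
  qed
  have "\<exists>k0. (\<exists>s. (\<forall>n. s n \<in> Domain R) \<and> s \<longlonglongrightarrow> k0) \<and> (\<forall>(q, z)\<in>R. cinner q k0 = z) \<and> norm k0 \<le> norm (f, k)"
  proof (rule riesz_gen)
    have "(0::'a \<times> 'b) \<in> D" unfolding D_def T_def using adj_pair_zero[of J] adj_zero[of "adj J"] by force
    thus "(0, 0) \<in> R" unfolding R_def by (auto intro!: exI[of _ 0] simp: zero_prod_def)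
    show "(q + q', z + z') \<in> R" if "(q, z) \<in> R" "(q', z') \<in> R" for q z q' z'
    proof -
      from that have a: "q \<in> D" "z = cinner q (f, k)" "q' \<in> D" "z' = cinner q' (f, k)"
        unfolding R_def by auto
      have "q + q' \<in> D" using a by (blast intro: Dadd)
      hence "(q + q', cinner (q + q') (f, k)) \<in> R" unfolding R_def by blast
      thus ?thesis using a by (simp only: cinner_add_left)
    qed
    show "(scaleC a q, a * z) \<in> R" if "(q, z) \<in> R" for a q z
    proof -
      from that have b: "q \<in> D" "z = cinner q (f, k)" unfolding R_def by auto
      have "scaleC a q \<in> D" using b by (blast intro: Dsc)
      hence "(scaleC a q, cinner (scaleC a q) (f, k)) \<in> R" unfolding R_def by blast
      thus ?thesis using b by (simp only: cinner_scaleC_left)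
    qed
    show "cmod z \<le> norm (f, k) * norm q" if "(q, z) \<in> R" for q z
    proof -
      from that have "z = cinner q (f, k)" unfolding R_def by auto
      thus ?thesis using cinner_cs[of q "(f, k)"] by (simp only: mult.commute)
    qed
  qed (rule norm_ge_zero)
  then obtain p0 where ex: "\<exists>s. (\<forall>n. s n \<in> Domain R) \<and> s \<longlonglongrightarrow> p0" and rep0: "\<forall>(q, z)\<in>R. cinner q p0 = z"
    by blast
  from ex obtain s where s: "\<And>n. s n \<in> Domain R" "s \<longlonglongrightarrow> p0" by blast
  have rep: "cinner q p0 = z" if "(q, z) \<in> R" for q z using bspec[OF rep0 that] by simp
  have sD: "s n \<in> D" for n using s(1)[of n] unfolding R_def by auto
  have sT: "s n \<in> adj J" for n using sD[of n] unfolding D_def T_def by auto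
  have p0T: "p0 \<in> T" unfolding T_def by (rule adj_closed_prod[OF sT s(2)])
  define a where "a = f - fst p0"
  define b where "b = k - snd p0"
  have abT: "(a, b) \<in> T"
    using adj_pair_diff[OF fk[unfolded T_def] p0T[unfolded T_def]] unfolding a_def b_def T_def
    by (cases p0) simp
  have orth: "cinner (fst p) a + cinner (snd p) b = 0" if "p \<in> D" for p
  proof -
    have "(p, cinner p (f, k)) \<in> R" unfolding R_def using that by blast
    hence "cinner p p0 = cinner p (f, k)" by (rule rep)
    obtain a' b' where p: "p = (a', b')" by (cases p) blast
    obtain a0 b0 where p0: "p0 = (a0, b0)" by (cases p0) blast
    have h: "cinner a' a0 + cinner b' b0 = cinner a' f + cinner b' k"
      using \<open>cinner p p0 = cinner p (f, k)\<close> unfolding p p0 by simp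
    have "cinner (fst p) a + cinner (snd p) b = (cinner a' f + cinner b' k) - (cinner a' a0 + cinner b' b0)"
      unfolding a_def b_def p p0 by (simp add: cinner_diff_right algebra_simps)
    thus ?thesis unfolding h by simp
  qed
  have "cinner x a = 0" for x
  proof -
    obtain y k' where yk: "(y, k') \<in> T" "(k', x - y) \<in> adj T"
      using von_neumann[of J x] unfolding T_def by blast
    have "(y, k') \<in> D" unfolding D_def using yk by auto
    from orth[OF this] have o: "cinner y a + cinner k' b = 0" by simp
    have "cinner b k' = cinner a (x - y)" by (rule adjD[OF yk(2) abT])
    hence "cnj (cinner b k') = cnj (cinner a (x - y))" by simp
    hence "cinner k' b = cinner (x - y) a" by (simp only: cinner_commute[of k' b] cinner_commute[of "x - y" a])
    with o show ?thesis by (simp add: cinner_diff_left)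
  qed
  hence a0: "a = 0" using cinner_eq_zero_iff[of a] by simp
  have bT: "(0, b) \<in> T" using abT a0 by simp
  have "cinner b b = 0"
  proof -
    have l: "(\<lambda>n. cinner b (snd (s n))) \<longlonglongrightarrow> cinner b (snd p0)"
      by (rule tendsto_cinner[OF tendsto_const tendsto_snd[OF s(2)]])
    have "cinner b (snd (s n)) = 0" for n
    proof -
      from sD[of n] obtain g where "(snd (s n), g) \<in> adj T" unfolding D_def by auto
      thus ?thesis using mul_perp_dom_adj[OF bT] by blast
    qed
    hence "(\<lambda>n. cinner b (snd (s n))) = (\<lambda>n. 0)" by simp
    with l have "(\<lambda>n. 0) \<longlonglongrightarrow> cinner b (snd p0)" by simp
    hence "0 = cinner b (snd p0)" by (rule LIMSEQ_unique[OF tendsto_const])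
    moreover have "cinner b k = 0" by (rule perp[OF bT])
    moreover have "cinner b b = cinner b k - cinner b (snd p0)"
      by (simp only: b_def[symmetric] cinner_diff_right[symmetric])
    ultimately show ?thesis by simp
  qed
  hence b0: "b = 0" using cinner_eq_zero_iff[of b] by simp
  have p0: "p0 = (f, k)" using a0 b0 unfolding a_def b_def by (simp add: prod_eq_iff)
  have "\<forall>n. \<exists>g. (snd (s n), g) \<in> adj T" using sD unfolding D_def by auto
  then obtain \<gamma> where \<gamma>: "\<And>n. (snd (s n), \<gamma> n) \<in> adj T" by metis
  have "\<forall>n. (fst (s n), snd (s n)) \<in> T \<and> (snd (s n), \<gamma> n) \<in> adj T" using sD \<gamma> unfolding D_def by auto
  moreover have "(\<lambda>n. fst (s n)) \<longlonglongrightarrow> f" using tendsto_fst[OF s(2)] p0 by simp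
  moreover have "(\<lambda>n. snd (s n)) \<longlonglongrightarrow> k" using tendsto_snd[OF s(2)] p0 by simp
  ultimately show ?thesis by (intro exI[of _ "\<lambda>n. fst (s n)"] exI[of _ "\<lambda>n. snd (s n)"] exI[of _ \<gamma>]) simp
qed



lemma sa_adj: "selfadjoint H \<Longrightarrow> p \<in> H \<longleftrightarrow> p \<in> adj H"
  by (simp add: selfadjoint_def)

lemma sa_herm:
  assumes "selfadjoint H" "(x, x') \<in> H" "(y, y') \<in> H"
  shows "cinner x' y = cinner x y'"
proof -
  have "(y, y') \<in> adj H" using assms by (simp add: selfadjoint_def)
  from adjD[OF this assms(2)] show ?thesis .
qed

lemma sa_add: "selfadjoint H \<Longrightarrow> (x, x') \<in> H \<Longrightarrow> (y, y') \<in> H \<Longrightarrow> (x + y, x' + y') \<in> H"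
  using adj_add[of x x' H y y'] by (simp add: selfadjoint_def)
lemma sa_diff: "selfadjoint H \<Longrightarrow> (x, x') \<in> H \<Longrightarrow> (y, y') \<in> H \<Longrightarrow> (x - y, x' - y') \<in> H"
  using adj_diff[of x x' H y y'] by (simp add: selfadjoint_def)
lemma sa_scale: "selfadjoint H \<Longrightarrow> (x, x') \<in> H \<Longrightarrow> (scaleC a x, scaleC a x') \<in> H"
  using adj_scale[of x x' H a] by (simp add: selfadjoint_def)
lemma sa_zero: "selfadjoint H \<Longrightarrow> (0, 0) \<in> H"
  using adj_zero[of H] by (simp add: selfadjoint_def)

lemma sa_real:
  assumes "selfadjoint H" "(x, x') \<in> H"
  shows "cinner x' x = complex_of_real (Re (cinner x' x))"
proof -
  have "cinner x' x = cinner x x'" by (rule sa_herm[OF assms(1,2,2)])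
  also have "\<dots> = cnj (cinner x' x)" by (rule cinner_commute)
  finally have "Im (cinner x' x) = Im (cnj (cinner x' x))" by (rule arg_cong)
  hence "Im (cinner x' x) = 0" by simp
  thus ?thesis by (simp add: complex_eq_iff)
qed

lemma sa_tq:
  assumes "selfadjoint H" "(x, x') \<in> H"
  shows "tq H x = cinner x' x"
proof -
  define x'' where "x'' = (SOME x''. (x, x'') \<in> H)"
  have "(x, x'') \<in> H" unfolding x''_def by (rule someI[of _ x'], rule assms(2))
  have a: "cinner x' x = cinner x x''" by (rule sa_herm[OF assms(1,2) \<open>(x, x'') \<in> H\<close>])
  have b: "cinner x' x = cinner x x'" by (rule sa_herm[OF assms(1,2,2)])
  have "tq H x = cinner x'' x" unfolding tq_def x''_def ..
  also have "\<dots> = cnj (cinner x x'')" by (rule cinner_commute)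
  also have "\<dots> = cnj (cinner x x')" using a b by simp
  also have "\<dots> = cinner x' x" by (rule cinner_commute[symmetric])
  finally show ?thesis .
qed

definition QH :: "('a::complex_inner \<times> 'a) set \<Rightarrow> real \<Rightarrow> 'a \<Rightarrow> real" where
  "QH H b x = Re (tq H x) - b * (norm x)\<^sup>2"

lemma QH_eq:
  assumes "selfadjoint H" "(x, x') \<in> H"
  shows "QH H b x = Re (cinner x' x) - b * (norm x)\<^sup>2"
  using sa_tq[OF assms] by (simp add: QH_def)

lemma QH_nonneg:
  assumes "selfadjoint H" "bounded_below_by b H" "x \<in> Domain H"
  shows "QH H b x \<ge> 0"
proof -
  from assms(3) obtain x' where xx: "(x, x') \<in> H" by auto
  have "complex_of_real (b * (norm x)\<^sup>2) \<le> cinner x' x"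
    using assms(2) xx unfolding bounded_below_by_def by auto
  hence "b * (norm x)\<^sup>2 \<le> Re (cinner x' x)" by (simp add: less_eq_complex_def)
  thus ?thesis using QH_eq[OF assms(1) xx] by simp
qed

lemma QH_expand:
  assumes sa: "selfadjoint H" and xx: "(x, x') \<in> H" and yy: "(y, y') \<in> H"
  shows "QH H b (y + scaleC t x) =
         QH H b y + 2 * Re (t * cinner (x' - scaleC (complex_of_real b) x) y) + (cmod t)\<^sup>2 * QH H b x"
proof -
  have uu: "(y + scaleC t x, y' + scaleC t x') \<in> H" by (rule sa_add[OF sa yy sa_scale[OF sa xx]])
  have h: "cinner y' x = cnj (cinner x' y)"
    using sa_herm[OF sa yy xx] by (simp add: cinner_commute[of y x'])
  have e1: "cinner (y' + scaleC t x') (y + scaleC t x) =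
        cinner y' y + cnj (t * cinner x' y) + t * cinner x' y + (t * cnj t) * cinner x' x"
    by (simp add: cinner_add_left cinner_add_right cinner_scaleC_left cinner_scaleC_right h algebra_simps)
  have tt: "t * cnj t = complex_of_real ((cmod t)\<^sup>2)" by (rule complex_norm_square[symmetric])
  have xr: "cinner x' x = complex_of_real (Re (cinner x' x))" by (rule sa_real[OF sa xx])
  have F1: "Re (cinner (y' + scaleC t x') (y + scaleC t x)) =
        Re (cinner y' y) + 2 * Re (t * cinner x' y) + (cmod t)\<^sup>2 * Re (cinner x' x)"
    unfolding e1 tt by (subst xr) (simp del: of_real_power)
  have F2: "(norm (y + scaleC t x))\<^sup>2 = (norm y)\<^sup>2 + 2 * Re (t * cinner x y) + (cmod t)\<^sup>2 * (norm x)\<^sup>2"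
    by (rule norm_add_scaleC_sq)
  have F3: "Re (t * cinner (x' - scaleC (complex_of_real b) x) y) = Re (t * cinner x' y) - b * Re (t * cinner x y)"
    by (simp add: cinner_diff_left cinner_scaleC_left right_diff_distrib mult.left_commute)
  show ?thesis
    unfolding QH_eq[OF sa uu] QH_eq[OF sa xx] QH_eq[OF sa yy] F1 F2 F3
    by (simp only: algebra_simps)
qed

lemma sa_minus: "selfadjoint H \<Longrightarrow> (x, x') \<in> H \<Longrightarrow> (- x, - x') \<in> H"
  using adj_minus[of x x' H] by (simp add: selfadjoint_def)

lemma dom_sa_diff: "selfadjoint H \<Longrightarrow> x \<in> Domain H \<Longrightarrow> y \<in> Domain H \<Longrightarrow> x - y \<in> Domain H"
  by (auto intro: sa_diff)
lemma dom_sa_add: "selfadjoint H \<Longrightarrow> x \<in> Domain H \<Longrightarrow> y \<in> Domain H \<Longrightarrow> x + y \<in> Domain H"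
  by (auto intro: sa_add)

lemma QH_cs:
  assumes sa: "selfadjoint H" and bb: "bounded_below_by b H" and xx: "(x, x') \<in> H" and yy: "(y, y') \<in> H"
  shows "(cmod (cinner (x' - scaleC (complex_of_real b) x) y))\<^sup>2 \<le> QH H b y * QH H b x"
proof (rule quad_cs)
  show "0 \<le> QH H b y" using QH_nonneg[OF sa bb] yy by blast
  show "0 \<le> QH H b x" using QH_nonneg[OF sa bb] xx by blast
  fix t
  have "y + scaleC t x \<in> Domain H" using sa_add[OF sa yy sa_scale[OF sa xx]] by blast
  hence "0 \<le> QH H b (y + scaleC t x)" by (rule QH_nonneg[OF sa bb])
  thus "0 \<le> QH H b y + 2 * Re (t * cinner (x' - scaleC (complex_of_real b) x) y) + (cmod t)\<^sup>2 * QH H b x"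
    by (simp only: QH_expand[OF sa xx yy])
qed

lemma QH_tri:
  assumes sa: "selfadjoint H" and bb: "bounded_below_by b H" and x: "x \<in> Domain H" and y: "y \<in> Domain H"
  shows "sqrt (QH H b (y + x)) \<le> sqrt (QH H b y) + sqrt (QH H b x)"
proof -
  from x obtain x' where xx: "(x, x') \<in> H" by auto
  from y obtain y' where yy: "(y, y') \<in> H" by auto
  define z where "z = cinner (x' - scaleC (complex_of_real b) x) y"
  have e: "QH H b (y + x) = QH H b y + 2 * Re z + QH H b x"
    using QH_expand[OF sa xx yy, where t=1 and b=b] unfolding z_def by (simp add: scaleC_one)
  have qy: "QH H b y \<ge> 0" by (rule QH_nonneg[OF sa bb y])
  have qx: "QH H b x \<ge> 0" by (rule QH_nonneg[OF sa bb x])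
  have "(cmod z)\<^sup>2 \<le> QH H b y * QH H b x" unfolding z_def by (rule QH_cs[OF sa bb xx yy])
  hence "cmod z \<le> sqrt (QH H b y * QH H b x)" by (rule real_le_rsqrt)
  hence "Re z \<le> sqrt (QH H b y) * sqrt (QH H b x)"
    using complex_Re_le_cmod[of z] by (simp add: real_sqrt_mult)
  hence "QH H b (y + x) \<le> (sqrt (QH H b y) + sqrt (QH H b x))\<^sup>2"
    unfolding e power2_sum using qx qy by simp
  hence "sqrt (QH H b (y + x)) \<le> sqrt ((sqrt (QH H b y) + sqrt (QH H b x))\<^sup>2)"
    by (rule real_sqrt_le_mono)
  also have "\<dots> = sqrt (QH H b y) + sqrt (QH H b x)" using qx qy by simp
  finally show ?thesis .
qed

lemma QH_minus:
  assumes sa: "selfadjoint H" and x: "x \<in> Domain H"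
  shows "QH H b (- x) = QH H b x"
proof -
  from x obtain x' where xx: "(x, x') \<in> H" by auto
  show ?thesis using QH_eq[OF sa xx] QH_eq[OF sa sa_minus[OF sa xx]]
    by (simp add: cinner_minus_left cinner_minus_right)
qed

lemma rho_diff:
  assumes sa: "selfadjoint H" and bb: "bounded_below_by b H" and x: "x \<in> Domain H" and y: "y \<in> Domain H"
  shows "\<bar>sqrt (QH H b x) - sqrt (QH H b y)\<bar> \<le> sqrt (QH H b (x - y))"
proof -
  have d1: "x - y \<in> Domain H" by (rule dom_sa_diff[OF sa x y])
  have d2: "y - x \<in> Domain H" by (rule dom_sa_diff[OF sa y x])
  have "sqrt (QH H b (y + (x - y))) \<le> sqrt (QH H b y) + sqrt (QH H b (x - y))"
    by (rule QH_tri[OF sa bb d1 y])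
  hence a: "sqrt (QH H b x) \<le> sqrt (QH H b y) + sqrt (QH H b (x - y))" by simp
  have "sqrt (QH H b (x + (y - x))) \<le> sqrt (QH H b x) + sqrt (QH H b (y - x))"
    by (rule QH_tri[OF sa bb d2 x])
  moreover have "QH H b (y - x) = QH H b (x - y)"
    using QH_minus[OF sa d1, of b] by simp
  ultimately have b: "sqrt (QH H b y) \<le> sqrt (QH H b x) + sqrt (QH H b (x - y))" by simp
  from a b show ?thesis by linarith
qed

lemma QH_le_cmod:
  "QH H b x \<le> cmod (tq H x) + \<bar>b\<bar> * (norm x)\<^sup>2"
proof -
  have "Re (tq H x) \<le> cmod (tq H x)" by (rule complex_Re_le_cmod)
  moreover have "- (b * (norm x)\<^sup>2) \<le> \<bar>b\<bar> * (norm x)\<^sup>2"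
    by (metis abs_ge_minus_self abs_mult abs_power2 abs_norm_cancel abs_ge_self
        minus_mult_left mult_right_mono zero_le_power2)
  ultimately show ?thesis unfolding QH_def by linarith
qed

lemma conv_cauchy:
  fixes w :: "nat \<Rightarrow> 'x::real_normed_vector"
  assumes "w \<longlonglongrightarrow> f" "e > 0"
  shows "\<exists>N. \<forall>n\<ge>N. \<forall>m\<ge>N. norm (w n - w m) < e"
proof -
  have "Cauchy w" using assms(1) by (rule LIMSEQ_imp_Cauchy)
  thus ?thesis unfolding Cauchy_iff using assms(2) by blast
qed

lemma small_QH:
  assumes fa: "form_approx H f w" and e: "e > 0"
  shows "\<exists>N. \<forall>n\<ge>N. \<forall>m\<ge>N. QH H b (w n - w m) < e"
proof -
  from fa have wf: "w \<longlonglongrightarrow> f" and tq: "\<forall>e>0. \<exists>N. \<forall>n\<ge>N. \<forall>m\<ge>N. cmod (tq H (w n - w m)) < e"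
    unfolding form_approx_def by auto
  obtain N1 where N1: "\<And>n m. n \<ge> N1 \<Longrightarrow> m \<ge> N1 \<Longrightarrow> cmod (tq H (w n - w m)) < e / 2"
    using tq e by (meson half_gt_zero)
  define \<delta> where "\<delta> = min 1 (e / (2 * (\<bar>b\<bar> + 1)))"
  have \<delta>: "\<delta> > 0" unfolding \<delta>_def using e by (simp add: add_pos_nonneg)
  obtain N2 where N2: "\<And>n m. n \<ge> N2 \<Longrightarrow> m \<ge> N2 \<Longrightarrow> norm (w n - w m) < \<delta>"
    using conv_cauchy[OF wf \<delta>] by blast
  have "QH H b (w n - w m) < e" if "n \<ge> max N1 N2" "m \<ge> max N1 N2" for n m
  proof -
    define d where "d = norm (w n - w m)"
    have d0: "d \<ge> 0" unfolding d_def by simp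
    have dd: "d < \<delta>" unfolding d_def using N2 that by simp
    have d1: "d \<le> 1" using dd unfolding \<delta>_def by simp
    have "d\<^sup>2 \<le> d" using d0 d1 by (simp add: power2_eq_square mult_left_le_one_le)
    hence "d\<^sup>2 < \<delta>" using dd by simp
    hence "(\<bar>b\<bar> + 1) * d\<^sup>2 \<le> (\<bar>b\<bar> + 1) * \<delta>" by (intro mult_left_mono) auto
    also have "(\<bar>b\<bar> + 1) * \<delta> \<le> (\<bar>b\<bar> + 1) * (e / (2 * (\<bar>b\<bar> + 1)))"
      unfolding \<delta>_def by (intro mult_left_mono) auto
    also have "\<dots> = e / 2"
    proof -
      have "\<bar>b\<bar> + 1 \<noteq> 0" by (metis abs_ge_zero add_nonneg_pos zero_less_one order.irrefl)
      thus ?thesis by (simp add: field_simps)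
    qed
    finally have a: "(\<bar>b\<bar> + 1) * d\<^sup>2 \<le> e / 2" .
    have "\<bar>b\<bar> * d\<^sup>2 \<le> (\<bar>b\<bar> + 1) * d\<^sup>2" by (simp add: distrib_right)
    with a have "\<bar>b\<bar> * d\<^sup>2 \<le> e / 2" by linarith
    moreover have "cmod (tq H (w n - w m)) < e / 2" using N1 that by simp
    moreover note QH_le_cmod[of H b "w n - w m"]
    ultimately show ?thesis unfolding d_def by linarith
  qed
  thus ?thesis by blast
qed

lemma QH_conv:
  assumes sa: "selfadjoint H" and bb: "bounded_below_by b H" and fa: "form_approx H f w"
  shows "\<exists>r\<ge>0. (\<lambda>n. QH H b (w n)) \<longlonglongrightarrow> r \<and> (\<lambda>n. tq H (w n)) \<longlonglongrightarrow> complex_of_real (r + b * (norm f)\<^sup>2)"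
proof -
  from fa have wD: "\<And>n. w n \<in> Domain H" and wf: "w \<longlonglongrightarrow> f" unfolding form_approx_def by auto
  define \<rho> where "\<rho> = (\<lambda>n. sqrt (QH H b (w n)))"
  have "\<exists>r0. \<rho> \<longlonglongrightarrow> r0"
  proof (rule cauchy_conv)
    fix e :: real assume e: "e > 0"
    hence "e\<^sup>2 > 0" by simp
    from small_QH[OF fa this] obtain N where N: "\<And>n m. n \<ge> N \<Longrightarrow> m \<ge> N \<Longrightarrow> QH H b (w n - w m) < e\<^sup>2"
      by blast
    have "norm (\<rho> n - \<rho> m) < e" if "n \<ge> N" "m \<ge> N" for n m
    proof -
      have "norm (\<rho> n - \<rho> m) \<le> sqrt (QH H b (w n - w m))"
        unfolding \<rho>_def real_norm_def by (rule rho_diff[OF sa bb wD wD])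
      also have "\<dots> < sqrt (e\<^sup>2)" using N[OF that] by (simp only: real_sqrt_less_iff)
      also have "\<dots> = e" using e by simp
      finally show ?thesis .
    qed
    thus "\<exists>N. \<forall>n\<ge>N. \<forall>m\<ge>N. norm (\<rho> n - \<rho> m) < e" by blast
  qed
  then obtain r0 where r0: "\<rho> \<longlonglongrightarrow> r0" by blast
  have r0pos: "r0 \<ge> 0" by (rule LIMSEQ_le_const[OF r0]) (use QH_nonneg[OF sa bb wD] in \<open>simp add: \<rho>_def\<close>)
  have qeq: "QH H b (w n) = (\<rho> n)\<^sup>2" for n
    unfolding \<rho>_def using QH_nonneg[OF sa bb wD[of n]] by simp
  have l1: "(\<lambda>n. QH H b (w n)) \<longlonglongrightarrow> r0\<^sup>2"
    unfolding qeq by (intro tendsto_power r0)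
  have teq: "tq H (w n) = complex_of_real (QH H b (w n) + b * (norm (w n))\<^sup>2)" for n
  proof -
    from wD[of n] obtain x' where xx: "(w n, x') \<in> H" by auto
    have "tq H (w n) = complex_of_real (Re (tq H (w n)))"
      using sa_real[OF sa xx] sa_tq[OF sa xx] by simp
    thus ?thesis by (simp add: QH_def)
  qed
  have l2: "(\<lambda>n. tq H (w n)) \<longlonglongrightarrow> complex_of_real (r0\<^sup>2 + b * (norm f)\<^sup>2)"
    unfolding teq by (intro tendsto_of_real tendsto_add l1 tendsto_mult tendsto_const tendsto_power tendsto_norm wf)
  have "r0\<^sup>2 \<ge> 0" by simp
  with l1 l2 show ?thesis by blast
qed

lemma QH_err_small:
  assumes sa: "selfadjoint H" and bb: "bounded_below_by b H" and fa: "form_approx H f w"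
    and ff: "(f, f') \<in> H" and eps: "\<epsilon> > 0"
  shows "\<exists>N. \<forall>n\<ge>N. QH H b (w n - f) \<le> \<epsilon>"
proof -
  from fa have wD: "\<And>n. w n \<in> Domain H" and wf: "w \<longlonglongrightarrow> f" unfolding form_approx_def by auto
  have fD: "f \<in> Domain H" using ff by auto
  from small_QH[OF fa eps] obtain N where N: "\<And>n m. n \<ge> N \<Longrightarrow> m \<ge> N \<Longrightarrow> QH H b (w n - w m) < \<epsilon>"
    by blast
  have "QH H b (w n - f) \<le> \<epsilon>" if n: "n \<ge> N" for n
  proof -
    define e where "e = w n - f"
    have eD: "e \<in> Domain H" unfolding e_def by (rule dom_sa_diff[OF sa wD fD])
    then obtain e' where ee: "(e, e') \<in> H" by auto
    define v where "v = e' - scaleC (complex_of_real b) e"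
    have q0: "QH H b e \<ge> 0" by (rule QH_nonneg[OF sa bb eD])
    have bnd: "(cmod (cinner v (w n - w m)))\<^sup>2 \<le> \<epsilon> * QH H b e" if m: "m \<ge> N" for m
    proof -
      have yD: "w n - w m \<in> Domain H" by (rule dom_sa_diff[OF sa wD wD])
      then obtain y' where yy: "(w n - w m, y') \<in> H" by auto
      have "(cmod (cinner v (w n - w m)))\<^sup>2 \<le> QH H b (w n - w m) * QH H b e"
        unfolding v_def by (rule QH_cs[OF sa bb ee yy])
      also have "\<dots> \<le> \<epsilon> * QH H b e"
        using N[OF n m] q0 by (intro mult_right_mono) auto
      finally show ?thesis .
    qed
    have lim: "(\<lambda>m. (cmod (cinner v (w n - w m)))\<^sup>2) \<longlonglongrightarrow> (cmod (cinner v e))\<^sup>2"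
      unfolding e_def by (intro tendsto_power tendsto_norm tendsto_cinner tendsto_const tendsto_diff wf)
    have "(cmod (cinner v e))\<^sup>2 \<le> \<epsilon> * QH H b e"
      by (rule tendsto_le[OF sequentially_bot tendsto_const lim]) (use bnd in \<open>auto simp: eventually_sequentially\<close>)
    moreover have "Re (cinner v e) = QH H b e"
      unfolding v_def QH_eq[OF sa ee] by (simp add: cinner_diff_left cinner_scaleC_left Re_cinner_self)
    moreover have "(Re (cinner v e))\<^sup>2 \<le> (cmod (cinner v e))\<^sup>2"
      using power_mono[OF abs_Re_le_cmod[of "cinner v e"] abs_ge_zero, of 2] by simp
    ultimately have "(QH H b e)\<^sup>2 \<le> \<epsilon> * QH H b e" by simp
    hence "QH H b e \<le> \<epsilon>"
    proof (cases "QH H b e = 0")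
      case True thus ?thesis using eps by simp
    next
      case False
      hence "QH H b e > 0" using q0 by simp
      moreover assume "(QH H b e)\<^sup>2 \<le> \<epsilon> * QH H b e"
      ultimately show ?thesis by (simp add: power2_eq_square mult_right_le_imp_le)
    qed
    thus ?thesis unfolding e_def .
  qed
  thus ?thesis by blast
qed

lemma QH_conv_dom:
  assumes sa: "selfadjoint H" and bb: "bounded_below_by b H" and fa: "form_approx H f w"
    and ff: "(f, f') \<in> H"
  shows "(\<lambda>n. QH H b (w n)) \<longlonglongrightarrow> QH H b f"
proof -
  from fa have wD: "\<And>n. w n \<in> Domain H" unfolding form_approx_def by auto
  have fD: "f \<in> Domain H" using ff by auto
  have rl: "(\<lambda>n. sqrt (QH H b (w n))) \<longlonglongrightarrow> sqrt (QH H b f)"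
  proof (rule LIMSEQ_I)
    fix r :: real assume r: "r > 0"
    hence "(r / 2)\<^sup>2 > 0" by simp
    from QH_err_small[OF sa bb fa ff this] obtain N where N: "\<And>n. n \<ge> N \<Longrightarrow> QH H b (w n - f) \<le> (r / 2)\<^sup>2"
      by blast
    have "norm (sqrt (QH H b (w n)) - sqrt (QH H b f)) < r" if "n \<ge> N" for n
    proof -
      have "norm (sqrt (QH H b (w n)) - sqrt (QH H b f)) \<le> sqrt (QH H b (w n - f))"
        unfolding real_norm_def by (rule rho_diff[OF sa bb wD fD])
      also have "\<dots> \<le> sqrt ((r / 2)\<^sup>2)" using N[OF that] by (rule real_sqrt_le_mono)
      also have "\<dots> = r / 2" using r by simp
      also have "\<dots> < r" using r by simp
      finally show ?thesis .
    qed
    thus "\<exists>no. \<forall>n\<ge>no. norm (sqrt (QH H b (w n)) - sqrt (QH H b f)) < r" by blast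
  qed
  have "(\<lambda>n. (sqrt (QH H b (w n)))\<^sup>2) \<longlonglongrightarrow> (sqrt (QH H b f))\<^sup>2" by (intro tendsto_power rl)
  moreover have "(\<lambda>n. (sqrt (QH H b (w n)))\<^sup>2) = (\<lambda>n. QH H b (w n))"
    using QH_nonneg[OF sa bb wD] by simp
  moreover have "(sqrt (QH H b f))\<^sup>2 = QH H b f" using QH_nonneg[OF sa bb fD] by simp
  ultimately show ?thesis by simp
qed



lemma repQ_zero:
  assumes "is_lin_rel S" "representing_map S c Q"
  shows "Q 0 = 0"
proof -
  have "0 \<in> Domain S" using assms(1) unfolding is_lin_rel_def by auto
  hence "Q (scaleC 0 0) = scaleC 0 (Q 0)" using assms(2) unfolding representing_map_def by blast
  thus ?thesis by simp
qed

lemma lin_add: "is_lin_rel S \<Longrightarrow> (x, x') \<in> S \<Longrightarrow> (y, y') \<in> S \<Longrightarrow> (x + y, x' + y') \<in> S"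
  unfolding is_lin_rel_def by blast
lemma lin_scale: "is_lin_rel S \<Longrightarrow> (x, x') \<in> S \<Longrightarrow> (scaleC a x, scaleC a x') \<in> S"
  unfolding is_lin_rel_def by blast

lemma repQ_add: "representing_map S c Q \<Longrightarrow> x \<in> Domain S \<Longrightarrow> y \<in> Domain S \<Longrightarrow> Q (x + y) = Q x + Q y"
  unfolding representing_map_def by blast
lemma repQ_scale: "representing_map S c Q \<Longrightarrow> x \<in> Domain S \<Longrightarrow> Q (scaleC a x) = scaleC a (Q x)"
  unfolding representing_map_def by blast
lemma repQ_eq: "representing_map S c Q \<Longrightarrow> (x, x') \<in> S \<Longrightarrow> y \<in> Domain S \<Longrightarrow>
    cinner x' y = complex_of_real c * cinner x y + cinner (Q x) (Q y)"
  unfolding representing_map_def by blast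

lemma ranQ_diff:
  assumes lin: "is_lin_rel S" and rep: "representing_map S c Q"
    and "a \<in> Q ` Domain S" "b \<in> Q ` Domain S"
  shows "a - b \<in> Q ` Domain S"
proof -
  from assms(3,4) obtain x y where x: "x \<in> Domain S" "a = Q x" and y: "y \<in> Domain S" "b = Q y" by auto
  from x(1) obtain x' where xx: "(x, x') \<in> S" by auto
  from y(1) obtain y' where yy: "(y, y') \<in> S" by auto
  have m: "(scaleC (-1) y, scaleC (-1) y') \<in> S" by (rule lin_scale[OF lin yy])
  have s: "(x + scaleC (-1) y, x' + scaleC (-1) y') \<in> S" by (rule lin_add[OF lin xx m])
  have "Q (x + scaleC (-1) y) = Q x + scaleC (-1) (Q y)"
    using repQ_add[OF rep x(1)] repQ_scale[OF rep y(1)] m by (auto simp: Domain.DomainI)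
  moreover have "scaleC (-1) v = - v" for v :: 'b by (simp add: scaleC_minus_left scaleC_one)
  ultimately have "a - b = Q (x + scaleC (-1) y)" using x y by simp
  moreover have "x + scaleC (-1) y \<in> Domain S" using s by auto
  ultimately show ?thesis by blast
qed

lemma riesz_H:
  fixes S H :: "('a::{complex_inner, complete_space} \<times> 'a) set"
    and Q :: "'a \<Rightarrow> 'b::{complex_inner, complete_space}"
  assumes lin: "is_lin_rel S" and rep: "representing_map S c Q"
    and sa: "selfadjoint H" and bb: "bounded_below_by c H" and SH: "S \<subseteq> H" and uu: "(u, u') \<in> H"
  shows "\<exists>k. (\<exists>s. (\<forall>n. s n \<in> Q ` Domain S) \<and> s \<longlonglongrightarrow> k) \<and>
      (\<forall>\<phi> \<phi>'. (\<phi>, \<phi>') \<in> S \<longrightarrow> cinner (Q \<phi>) k = cinner (\<phi>' - scaleC (complex_of_real c) \<phi>) u) \<and>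
      (norm k)\<^sup>2 \<le> QH H c u"
proof -
  define R where "R = {(Q \<phi>, cinner (\<phi>' - scaleC (complex_of_real c) \<phi>) u) | \<phi> \<phi>'. (\<phi>, \<phi>') \<in> S}"
  define C where "C = sqrt (QH H c u)"
  have uD: "u \<in> Domain H" using uu by auto
  have q0: "QH H c u \<ge> 0" by (rule QH_nonneg[OF sa bb uD])
  have "\<exists>k. (\<exists>s. (\<forall>n. s n \<in> Domain R) \<and> s \<longlonglongrightarrow> k) \<and> (\<forall>(q, z)\<in>R. cinner q k = z) \<and> norm k \<le> C"
  proof (rule riesz_gen)
    have "(0, 0) \<in> S" using lin unfolding is_lin_rel_def by auto
    hence "(Q 0, cinner (0 - scaleC (complex_of_real c) 0) u) \<in> R" unfolding R_def by blast
    thus "(0, 0) \<in> R" using repQ_zero[OF lin rep] by simp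
    show "(q + q', z + z') \<in> R" if "(q, z) \<in> R" "(q', z') \<in> R" for q z q' z'
    proof -
      from that obtain \<phi> \<phi>' \<psi> \<psi>' where p: "(\<phi>, \<phi>') \<in> S" "q = Q \<phi>" "z = cinner (\<phi>' - scaleC (complex_of_real c) \<phi>) u"
        and p': "(\<psi>, \<psi>') \<in> S" "q' = Q \<psi>" "z' = cinner (\<psi>' - scaleC (complex_of_real c) \<psi>) u"
        unfolding R_def by blast
      have s: "(\<phi> + \<psi>, \<phi>' + \<psi>') \<in> S" by (rule lin_add[OF lin p(1) p'(1)])
      hence "(Q (\<phi> + \<psi>), cinner ((\<phi>' + \<psi>') - scaleC (complex_of_real c) (\<phi> + \<psi>)) u) \<in> R"
        unfolding R_def by blast
      moreover have "Q (\<phi> + \<psi>) = q + q'" using repQ_add[OF rep] p(1,2) p'(1,2) by blast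
      moreover have "cinner ((\<phi>' + \<psi>') - scaleC (complex_of_real c) (\<phi> + \<psi>)) u = z + z'"
        unfolding p(3) p'(3) by (simp add: scaleC_add_right cinner_add_left cinner_diff_left algebra_simps)
      ultimately show ?thesis by simp
    qed
    show "(scaleC a q, a * z) \<in> R" if "(q, z) \<in> R" for a q z
    proof -
      from that obtain \<phi> \<phi>' where p: "(\<phi>, \<phi>') \<in> S" "q = Q \<phi>" "z = cinner (\<phi>' - scaleC (complex_of_real c) \<phi>) u"
        unfolding R_def by blast
      have s: "(scaleC a \<phi>, scaleC a \<phi>') \<in> S" by (rule lin_scale[OF lin p(1)])
      hence "(Q (scaleC a \<phi>), cinner (scaleC a \<phi>' - scaleC (complex_of_real c) (scaleC a \<phi>)) u) \<in> R"
        unfolding R_def by blast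
      moreover have "Q (scaleC a \<phi>) = scaleC a q" using repQ_scale[OF rep] p(1,2) by blast
      moreover have "scaleC (complex_of_real c) (scaleC a \<phi>) = scaleC a (scaleC (complex_of_real c) \<phi>)"
        by (simp add: scaleC_scaleC mult.commute)
      moreover have "cinner (scaleC a \<phi>' - scaleC a (scaleC (complex_of_real c) \<phi>)) u = a * z"
        unfolding p(3) by (simp add: scaleC_diff_right[symmetric] cinner_scaleC_left)
      ultimately show ?thesis by simp
    qed
    show "C \<ge> 0" unfolding C_def using q0 by simp
    show "cmod z \<le> C * norm q" if "(q, z) \<in> R" for q z
    proof -
      from that obtain \<phi> \<phi>' where p: "(\<phi>, \<phi>') \<in> S" "q = Q \<phi>" "z = cinner (\<phi>' - scaleC (complex_of_real c) \<phi>) u"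
        unfolding R_def by blast
      have pH: "(\<phi>, \<phi>') \<in> H" using p(1) SH by auto
      have cs: "(cmod (cinner (\<phi>' - scaleC (complex_of_real c) \<phi>) u))\<^sup>2 \<le> QH H c u * QH H c \<phi>"
        by (rule QH_cs[OF sa bb pH uu])
      have \<phi>D: "\<phi> \<in> Domain S" using p(1) by auto
      have e1: "cinner \<phi>' \<phi> = complex_of_real c * cinner \<phi> \<phi> + cinner (Q \<phi>) (Q \<phi>)"
        by (rule repQ_eq[OF rep p(1) \<phi>D])
      have "Re (cinner \<phi>' \<phi>) = c * Re (cinner \<phi> \<phi>) + Re (cinner (Q \<phi>) (Q \<phi>))"
        unfolding e1 by simp
      hence "Re (cinner \<phi>' \<phi>) = c * (norm \<phi>)\<^sup>2 + (norm (Q \<phi>))\<^sup>2"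
        by (simp only: Re_cinner_self)
      hence qp: "QH H c \<phi> = (norm q)\<^sup>2" unfolding QH_eq[OF sa pH] p(2) by simp
      have "(cmod z)\<^sup>2 \<le> QH H c u * (norm q)\<^sup>2" using cs unfolding p(3)[symmetric] qp .
      hence "cmod z \<le> sqrt (QH H c u * (norm q)\<^sup>2)" by (rule real_le_rsqrt)
      also have "\<dots> = C * norm q" unfolding C_def by (simp add: real_sqrt_mult)
      finally show ?thesis .
    qed
  qed
  then obtain k where ex: "\<exists>s. (\<forall>n. s n \<in> Domain R) \<and> s \<longlonglongrightarrow> k" and rep0: "\<forall>(q, z)\<in>R. cinner q k = z"
    and nk: "norm k \<le> C" by blast
  from ex obtain s where s: "\<And>n. s n \<in> Domain R" "s \<longlonglongrightarrow> k" by blast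
  have "Domain R \<subseteq> Q ` Domain S" unfolding R_def by auto
  hence sQ: "\<forall>n. s n \<in> Q ` Domain S" using s(1) by blast
  have eqs: "cinner (Q \<phi>) k = cinner (\<phi>' - scaleC (complex_of_real c) \<phi>) u" if "(\<phi>, \<phi>') \<in> S" for \<phi> \<phi>'
  proof -
    have "(Q \<phi>, cinner (\<phi>' - scaleC (complex_of_real c) \<phi>) u) \<in> R" unfolding R_def using that by blast
    from bspec[OF rep0 this] show ?thesis by simp
  qed
  have "(norm k)\<^sup>2 \<le> C\<^sup>2" using nk by (intro power_mono) auto
  hence "(norm k)\<^sup>2 \<le> QH H c u" unfolding C_def using q0 by simp
  with sQ s(2) eqs show ?thesis by blast
qed

lemma lim_perp:
  assumes "\<And>n. cinner (s n) m = 0" "s \<longlonglongrightarrow> k"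
  shows "cinner k m = 0"
proof -
  have l: "(\<lambda>n. cinner (s n) m) \<longlonglongrightarrow> cinner k m" by (rule tendsto_cinner[OF assms(2) tendsto_const])
  have "(\<lambda>n. cinner (s n) m) = (\<lambda>n. 0)" using assms(1) by simp
  with l have "(\<lambda>n. 0) \<longlonglongrightarrow> cinner k m" by simp
  hence "0 = cinner k m" by (rule LIMSEQ_unique[OF tendsto_const])
  thus ?thesis by simp
qed

lemma riesz_unique:
  assumes s1: "\<And>n. s1 n \<in> Q ` Domain S" "s1 \<longlonglongrightarrow> k1"
    and s2: "\<And>n. s2 n \<in> Q ` Domain S" "s2 \<longlonglongrightarrow> k2"
    and eq: "\<And>\<phi>. \<phi> \<in> Domain S \<Longrightarrow> cinner (Q \<phi>) k1 = cinner (Q \<phi>) k2"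
  shows "k1 = k2"
proof -
  define m where "m = k1 - k2"
  have z: "cinner v m = 0" if "v \<in> Q ` Domain S" for v
    using that eq unfolding m_def by (auto simp: cinner_diff_right)
  have "cinner k1 m = 0" by (rule lim_perp[OF _ s1(2)]) (rule z[OF s1(1)])
  moreover have "cinner k2 m = 0" by (rule lim_perp[OF _ s2(2)]) (rule z[OF s2(1)])
  ultimately have "cinner m m = 0" unfolding m_def by (simp add: cinner_diff_left)
  thus ?thesis using cinner_eq_zero_iff[of m] unfolding m_def by simp
qed

lemma in_T:
  assumes "\<And>\<phi> \<phi>'. (\<phi>, \<phi>') \<in> S \<Longrightarrow> cinner (Q \<phi>) k = cinner (\<phi>' - scaleC (complex_of_real c) \<phi>) u"
  shows "(u, k) \<in> adj (companion S c Q)"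
  unfolding adj_iff companion_def using assms by auto

lemma T_perp:
  assumes s: "\<And>n. s n \<in> Q ` Domain S" "s \<longlonglongrightarrow> k" and m: "(0, m) \<in> adj (companion S c Q)"
  shows "cinner m k = 0"
proof -
  have z: "cinner v m = 0" if "v \<in> Q ` Domain S" for v
  proof -
    from that obtain \<phi> \<phi>' where p: "(\<phi>, \<phi>') \<in> S" "v = Q \<phi>" by auto
    have "(Q \<phi>, \<phi>' - scaleC (complex_of_real c) \<phi>) \<in> companion S c Q"
      unfolding companion_def using p(1) by blast
    from adjD[OF m this] show ?thesis using p(2) by simp
  qed
  have "cinner k m = 0" by (rule lim_perp[OF _ s(2)]) (rule z[OF s(1)])
  hence "cnj (cinner k m) = 0" by simp
  thus ?thesis by (simp only: cinner_commute[of m k])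
qed

definition perpT :: "('a::complex_inner \<times> 'b::complex_inner) set \<Rightarrow> 'b \<Rightarrow> bool" where
  "perpT T \<kappa> \<longleftrightarrow> (\<forall>m. (0, m) \<in> T \<longrightarrow> cinner m \<kappa> = 0)"

lemma perpT_lim:
  assumes "\<And>n. perpT T (\<kappa> n)" "\<kappa> \<longlonglongrightarrow> k"
  shows "perpT T k"
  unfolding perpT_def
proof (intro allI impI)
  fix m assume m: "(0, m) \<in> T"
  have l: "(\<lambda>n. cinner m (\<kappa> n)) \<longlonglongrightarrow> cinner m k" by (rule tendsto_cinner[OF tendsto_const assms(2)])
  have "(\<lambda>n. cinner m (\<kappa> n)) = (\<lambda>n. 0)" using assms(1) m unfolding perpT_def by simp
  with l have "(\<lambda>n. 0) \<longlonglongrightarrow> cinner m k" by simp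
  hence "0 = cinner m k" by (rule LIMSEQ_unique[OF tendsto_const])
  thus "cinner m k = 0" by simp
qed

lemma T_unique:
  assumes "(f, k1) \<in> adj J" "(f, k2) \<in> adj J" "perpT (adj J) k1" "perpT (adj J) k2"
  shows "k1 = k2"
proof -
  have "(f - f, k1 - k2) \<in> adj J" by (rule adj_diff[OF assms(1,2)])
  hence m: "(0, k1 - k2) \<in> adj J" by simp
  have "cinner (k1 - k2) k1 = 0" "cinner (k1 - k2) k2 = 0"
    using assms(3,4) m unfolding perpT_def by auto
  hence "cinner (k1 - k2) (k1 - k2) = 0" by (simp add: cinner_diff_right)
  thus ?thesis using cinner_eq_zero_iff[of "k1 - k2"] by simp
qed

lemma krein_val:
  fixes J :: "('b::{complex_inner,complete_space} \<times> 'a::{complex_inner,complete_space}) set" and c :: real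
  defines "T \<equiv> adj J"
  defines "K \<equiv> rel_shift c (rel_comp (adj T) T)"
  assumes fD: "f \<in> form_dom K"
  shows "\<exists>\<kappa>. (f, \<kappa>) \<in> T \<and> perpT T \<kappa> \<and> form_val K f = (norm \<kappa>)\<^sup>2 + c * (norm f)\<^sup>2"
proof -
  define v where "v = (SOME u. form_approx K f u)"
  have ex: "\<exists>u. form_approx K f u" using fD unfolding form_dom_def by auto
  have fa: "form_approx K f v" unfolding v_def by (rule someI_ex[OF ex])
  hence vD: "\<And>n. v n \<in> Domain K" and vf: "v \<longlonglongrightarrow> f" unfolding form_approx_def by auto
  have "\<forall>n. \<exists>\<kappa> \<gamma>. (v n, \<kappa>) \<in> T \<and> (\<kappa>, \<gamma>) \<in> adj T"
  proof
    fix n from vD[of n] obtain g where "(v n, g) \<in> K" by auto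
    thus "\<exists>\<kappa> \<gamma>. (v n, \<kappa>) \<in> T \<and> (\<kappa>, \<gamma>) \<in> adj T" unfolding K_def krein_mem by blast
  qed
  then obtain \<kappa> \<gamma> where kg: "\<And>n. (v n, \<kappa> n) \<in> T" "\<And>n. (\<kappa> n, \<gamma> n) \<in> adj T" by metis
  have tqd: "tq K (v n - v m) = cinner (\<kappa> n - \<kappa> m) (\<kappa> n - \<kappa> m) + complex_of_real c * cinner (v n - v m) (v n - v m)" for n m
    unfolding K_def by (rule krein_tq[OF adj_diff[OF kg(1)[unfolded T_def] kg(1)[unfolded T_def], folded T_def] adj_diff[OF kg(2) kg(2)]])
  have QHd: "QH K c (v n - v m) = (norm (\<kappa> n - \<kappa> m))\<^sup>2" for n m
    unfolding QH_def tqd by (simp add: Re_cinner_self)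
  have "\<exists>k0. \<kappa> \<longlonglongrightarrow> k0"
  proof (rule cauchy_conv)
    fix e :: real assume e: "e > 0"
    hence "e\<^sup>2 > 0" by simp
    from small_QH[OF fa this] obtain N where N: "\<And>n m. n \<ge> N \<Longrightarrow> m \<ge> N \<Longrightarrow> QH K c (v n - v m) < e\<^sup>2"
      by blast
    have "norm (\<kappa> n - \<kappa> m) < e" if "n \<ge> N" "m \<ge> N" for n m
    proof -
      have "(norm (\<kappa> n - \<kappa> m))\<^sup>2 < e\<^sup>2" using N[OF that] unfolding QHd .
      thus ?thesis using e by (simp add: power_less_imp_less_base)
    qed
    thus "\<exists>N. \<forall>n\<ge>N. \<forall>m\<ge>N. norm (\<kappa> n - \<kappa> m) < e" by blast
  qed
  then obtain k0 where k0: "\<kappa> \<longlonglongrightarrow> k0" by blast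
  have fk0: "(f, k0) \<in> T" unfolding T_def by (rule adj_closed[OF kg(1)[unfolded T_def] vf k0])
  have pk: "perpT T (\<kappa> n)" for n
    unfolding perpT_def using mul_perp_dom_adj[OF _ kg(2)] by blast
  have pk0: "perpT T k0" by (rule perpT_lim[OF pk k0])
  have tqn: "tq K (v n) = complex_of_real ((norm (\<kappa> n))\<^sup>2 + c * (norm (v n))\<^sup>2)" for n
    unfolding K_def by (subst krein_tq[OF kg(1) kg(2)]) (simp add: cinner_self_norm)
  have "(\<lambda>n. tq K (v n)) \<longlonglongrightarrow> complex_of_real ((norm k0)\<^sup>2 + c * (norm f)\<^sup>2)"
    unfolding tqn by (intro tendsto_of_real tendsto_add tendsto_mult tendsto_const tendsto_power tendsto_norm k0 vf)
  hence "lim (\<lambda>n. tq K (v n)) = complex_of_real ((norm k0)\<^sup>2 + c * (norm f)\<^sup>2)" by (rule limI)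
  hence "form_val K f = (norm k0)\<^sup>2 + c * (norm f)\<^sup>2" unfolding form_val_def v_def[symmetric] by simp
  with fk0 pk0 show ?thesis by blast
qed



lemma sq_small:
  fixes a c e :: real
  assumes "a \<ge> 0" "a < min 1 (e / (2 * (\<bar>c\<bar> + 1)))" "e > 0"
  shows "\<bar>c\<bar> * a\<^sup>2 < e / 2"
proof -
  have cp: "\<bar>c\<bar> + 1 > 0" by (metis abs_ge_zero add_nonneg_pos zero_less_one)
  have a1: "a \<le> 1" using assms(2) by simp
  have "a\<^sup>2 \<le> a" using assms(1) a1 by (simp add: power2_eq_square mult_left_le_one_le)
  have "\<bar>c\<bar> * a\<^sup>2 \<le> (\<bar>c\<bar> + 1) * a\<^sup>2" by (simp add: distrib_right)
  also have "\<dots> \<le> (\<bar>c\<bar> + 1) * a" using \<open>a\<^sup>2 \<le> a\<close> cp by (intro mult_left_mono) auto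
  also have "\<dots> < (\<bar>c\<bar> + 1) * (e / (2 * (\<bar>c\<bar> + 1)))" using assms(2) cp by (intro mult_strict_left_mono) auto
  also have "\<dots> = e / 2" using cp by (simp add: field_simps)
  finally show ?thesis .
qed

lemma dir1:
  fixes S H :: "('a::{complex_inner, complete_space} \<times> 'a) set"
    and Q :: "'a \<Rightarrow> 'b::{complex_inner, complete_space}" and c :: real
  assumes lin: "is_lin_rel S" and rep: "representing_map S c Q"
    and sa: "selfadjoint H" and SH: "S \<subseteq> H" and bbc: "bounded_below_by c H"
  shows "form_le (krein_ext S c Q) H"
proof -
  define J where "J = companion S c Q"
  define T where "T = adj J"
  define K where "K = krein_ext S c Q"
  have K_eq: "K = rel_shift c (rel_comp (adj T) T)" by (simp add: K_def krein_ext_def T_def J_def)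
  have main: "f \<in> form_dom K \<and> form_val K f \<le> form_val H f" if fH: "f \<in> form_dom H" for f
  proof -
    define w where "w = (SOME u. form_approx H f u)"
    have ex: "\<exists>u. form_approx H f u" using fH unfolding form_dom_def by auto
    have fa: "form_approx H f w" unfolding w_def by (rule someI_ex[OF ex])
    hence wD: "\<And>n. w n \<in> Domain H" and wf: "w \<longlonglongrightarrow> f" unfolding form_approx_def by auto
    have "\<forall>n. \<exists>x'. (w n, x') \<in> H" using wD by auto
    then obtain w' where ww: "\<And>n. (w n, w' n) \<in> H" by metis
    let ?P = "\<lambda>u k. (\<exists>s. (\<forall>n. s n \<in> Q ` Domain S) \<and> s \<longlonglongrightarrow> k) \<and>
      (\<forall>\<phi> \<phi>'. (\<phi>, \<phi>') \<in> S \<longrightarrow> cinner (Q \<phi>) k = cinner (\<phi>' - scaleC (complex_of_real c) \<phi>) u) \<and>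
      (norm k)\<^sup>2 \<le> QH H c u"
    have "\<forall>n. \<exists>k. ?P (w n) k" using riesz_H[OF lin rep sa bbc SH ww] by blast
    then obtain k where kP: "\<And>n. ?P (w n) (k n)" by metis
    have kT: "(w n, k n) \<in> T" for n
      unfolding T_def J_def by (rule in_T) (use kP[of n] in blast)
    have kdiff: "(norm (k n - k m))\<^sup>2 \<le> QH H c (w n - w m)" for n m
    proof -
      have dd: "(w n - w m, w' n - w' m) \<in> H" by (rule sa_diff[OF sa ww ww])
      obtain k' where k': "?P (w n - w m) k'" using riesz_H[OF lin rep sa bbc SH dd] by blast
      from kP[of n] obtain s1 where s1: "\<And>j. s1 j \<in> Q ` Domain S" "s1 \<longlonglongrightarrow> k n" by blast
      from kP[of m] obtain s2 where s2: "\<And>j. s2 j \<in> Q ` Domain S" "s2 \<longlonglongrightarrow> k m" by blast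
      from k' obtain s3 where s3: "\<And>j. s3 j \<in> Q ` Domain S" "s3 \<longlonglongrightarrow> k'" by blast
      have sd: "\<And>j. s1 j - s2 j \<in> Q ` Domain S" by (rule ranQ_diff[OF lin rep s1(1) s2(1)])
      have sdl: "(\<lambda>j. s1 j - s2 j) \<longlonglongrightarrow> k n - k m" by (intro tendsto_diff s1(2) s2(2))
      have "k n - k m = k'"
      proof (rule riesz_unique[OF sd sdl s3])
        fix \<phi> assume "\<phi> \<in> Domain S"
        then obtain \<phi>' where p: "(\<phi>, \<phi>') \<in> S" by auto
        have "cinner (Q \<phi>) (k n - k m) = cinner (\<phi>' - scaleC (complex_of_real c) \<phi>) (w n)
              - cinner (\<phi>' - scaleC (complex_of_real c) \<phi>) (w m)"
          using kP[of n] kP[of m] p by (simp add: cinner_diff_right)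
        also have "\<dots> = cinner (Q \<phi>) k'" using k' p by (simp add: cinner_diff_right)
        finally show "cinner (Q \<phi>) (k n - k m) = cinner (Q \<phi>) k'" .
      qed
      thus ?thesis using k' by simp
    qed
    have "\<exists>k0. k \<longlonglongrightarrow> k0"
    proof (rule cauchy_conv)
      fix e :: real assume e: "e > 0"
      hence "e\<^sup>2 > 0" by simp
      from small_QH[OF fa this] obtain N where N: "\<And>n m. n \<ge> N \<Longrightarrow> m \<ge> N \<Longrightarrow> QH H c (w n - w m) < e\<^sup>2"
        by blast
      have "norm (k n - k m) < e" if "n \<ge> N" "m \<ge> N" for n m
      proof -
        have "(norm (k n - k m))\<^sup>2 < e\<^sup>2" using kdiff[of n m] N[OF that] by linarith
        thus ?thesis using e by (simp add: power_less_imp_less_base)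
      qed
      thus "\<exists>N. \<forall>n\<ge>N. \<forall>m\<ge>N. norm (k n - k m) < e" by blast
    qed
    then obtain k0 where k0: "k \<longlonglongrightarrow> k0" by blast
    have fk0: "(f, k0) \<in> T" unfolding T_def by (rule adj_closed[OF kT[unfolded T_def] wf k0])
    have pk: "perpT T (k n)" for n
    proof -
      from kP[of n] obtain s1 where s1: "\<And>j. s1 j \<in> Q ` Domain S" "s1 \<longlonglongrightarrow> k n" by blast
      show ?thesis unfolding perpT_def T_def J_def using T_perp[OF s1] by blast
    qed
    have pk0: "perpT T k0" by (rule perpT_lim[OF pk k0])
    obtain r where r: "r \<ge> 0" "(\<lambda>n. QH H c (w n)) \<longlonglongrightarrow> r"
      "(\<lambda>n. tq H (w n)) \<longlonglongrightarrow> complex_of_real (r + c * (norm f)\<^sup>2)"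
      using QH_conv[OF sa bbc fa] by blast
    have fvH: "form_val H f = r + c * (norm f)\<^sup>2"
      unfolding form_val_def w_def[symmetric] using limI[OF r(3)] by simp
    have nk0: "(norm k0)\<^sup>2 \<le> r"
    proof (rule tendsto_le[OF sequentially_bot r(2)])
      show "(\<lambda>n. (norm (k n))\<^sup>2) \<longlonglongrightarrow> (norm k0)\<^sup>2" by (intro tendsto_power tendsto_norm k0)
      show "\<forall>\<^sub>F n in sequentially. (norm (k n))\<^sup>2 \<le> QH H c (w n)" using kP by simp
    qed
    obtain y \<kappa> \<gamma> where yk: "\<And>n. (y n, \<kappa> n) \<in> T" "\<And>n. (\<kappa> n, \<gamma> n) \<in> adj T"
      and yf: "y \<longlonglongrightarrow> f" and kk0: "\<kappa> \<longlonglongrightarrow> k0"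
      using density[where J=J and f=f and k=k0] fk0 pk0 unfolding T_def perpT_def by blast
    have faK: "form_approx K f y"
      unfolding form_approx_def
    proof (intro conjI allI impI)
      show "y n \<in> Domain K" for n
      proof -
        have "(y n, \<gamma> n + scaleC (complex_of_real c) (y n)) \<in> K"
          unfolding K_eq krein_mem using yk[of n] by blast
        thus ?thesis by blast
      qed
      show "y \<longlonglongrightarrow> f" by (rule yf)
      fix e :: real assume e: "e > 0"
      define \<delta>1 where "\<delta>1 = min 1 (e / (2 * (\<bar>1::real\<bar> + 1)))"
      define \<delta>2 where "\<delta>2 = min 1 (e / (2 * (\<bar>c\<bar> + 1)))"
      have d1: "\<delta>1 > 0" unfolding \<delta>1_def using e by simp
      have d2: "\<delta>2 > 0" unfolding \<delta>2_def using e by (simp add: add_pos_nonneg)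
      obtain N1 where N1: "\<And>n m. n \<ge> N1 \<Longrightarrow> m \<ge> N1 \<Longrightarrow> norm (\<kappa> n - \<kappa> m) < \<delta>1"
        using conv_cauchy[OF kk0 d1] by blast
      obtain N2 where N2: "\<And>n m. n \<ge> N2 \<Longrightarrow> m \<ge> N2 \<Longrightarrow> norm (y n - y m) < \<delta>2"
        using conv_cauchy[OF yf d2] by blast
      have "cmod (tq K (y n - y m)) < e" if "n \<ge> max N1 N2" "m \<ge> max N1 N2" for n m
      proof -
        have "tq K (y n - y m) = cinner (\<kappa> n - \<kappa> m) (\<kappa> n - \<kappa> m) + complex_of_real c * cinner (y n - y m) (y n - y m)"
          unfolding K_eq by (rule krein_tq[OF adj_diff[OF yk(1)[unfolded T_def] yk(1)[unfolded T_def], folded T_def] adj_diff[OF yk(2) yk(2)]])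
        hence "tq K (y n - y m) = complex_of_real ((norm (\<kappa> n - \<kappa> m))\<^sup>2 + c * (norm (y n - y m))\<^sup>2)"
          by (simp add: cinner_self_norm)
        hence "cmod (tq K (y n - y m)) = \<bar>(norm (\<kappa> n - \<kappa> m))\<^sup>2 + c * (norm (y n - y m))\<^sup>2\<bar>"
          by (simp only: norm_of_real)
        also have "\<dots> \<le> \<bar>1\<bar> * (norm (\<kappa> n - \<kappa> m))\<^sup>2 + \<bar>c\<bar> * (norm (y n - y m))\<^sup>2"
          by (simp add: abs_mult abs_triangle_ineq[THEN order_trans])
        also have "\<dots> < e / 2 + e / 2"
          using sq_small[OF norm_ge_zero _ e, of "\<kappa> n - \<kappa> m" 1] sq_small[OF norm_ge_zero _ e, of "y n - y m" c]
            N1 N2 that unfolding \<delta>1_def \<delta>2_def by (simp add: add_strict_mono)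
        finally show ?thesis by simp
      qed
      thus "\<exists>N. \<forall>n\<ge>N. \<forall>m\<ge>N. cmod (tq K (y n - y m)) < e" by blast
    qed
    hence fK: "f \<in> form_dom K" unfolding form_dom_def by blast
    obtain \<kappa>0 where \<kappa>0: "(f, \<kappa>0) \<in> T" "perpT T \<kappa>0" "form_val K f = (norm \<kappa>0)\<^sup>2 + c * (norm f)\<^sup>2"
      using krein_val[where J=J and c=c and f=f] fK unfolding K_eq T_def by blast
    have "\<kappa>0 = k0" using T_unique[of f \<kappa>0 J k0] \<kappa>0 fk0 pk0 unfolding T_def by blast
    hence "form_val K f \<le> form_val H f" using \<kappa>0(3) fvH nk0 by simp
    with fK show ?thesis by blast
  qed
  show ?thesis unfolding form_le_def K_def[symmetric] using main by blast
qed

lemma form_val_dom_H: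
  assumes sa: "selfadjoint H" and sb: "semibounded H" and ff: "(\<phi>, \<phi>') \<in> H"
  shows "\<phi> \<in> form_dom H \<and> form_val H \<phi> = Re (cinner \<phi>' \<phi>)"
proof -
  have "form_approx H \<phi> (\<lambda>n. \<phi>)"
    unfolding form_approx_def using ff by (auto simp: tq_def)
  hence fD: "\<phi> \<in> form_dom H" unfolding form_dom_def by blast
  from sb obtain m where bb: "bounded_below_by m H" unfolding semibounded_def by blast
  define w where "w = (SOME u. form_approx H \<phi> u)"
  have ex: "\<exists>u. form_approx H \<phi> u" using fD unfolding form_dom_def by auto
  have fa: "form_approx H \<phi> w" unfolding w_def by (rule someI_ex[OF ex])
  obtain r where r: "r \<ge> 0" "(\<lambda>n. QH H m (w n)) \<longlonglongrightarrow> r"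
      "(\<lambda>n. tq H (w n)) \<longlonglongrightarrow> complex_of_real (r + m * (norm \<phi>)\<^sup>2)"
    using QH_conv[OF sa bb fa] by blast
  have "r = QH H m \<phi>" using LIMSEQ_unique[OF r(2) QH_conv_dom[OF sa bb fa ff]] .
  hence "form_val H \<phi> = QH H m \<phi> + m * (norm \<phi>)\<^sup>2"
    unfolding form_val_def w_def[symmetric] using limI[OF r(3)] by simp
  also have "\<dots> = Re (cinner \<phi>' \<phi>)" unfolding QH_eq[OF sa ff] by simp
  finally show ?thesis using fD by blast
qed

lemma dir2:
  fixes S H :: "('a::{complex_inner, complete_space} \<times> 'a) set"
    and Q :: "'a \<Rightarrow> 'b::{complex_inner, complete_space}" and c :: real
  assumes sa: "selfadjoint H" and sb: "semibounded H" and fl: "form_le (krein_ext S c Q) H"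
  shows "bounded_below_by c H"
  unfolding bounded_below_by_def
proof (intro ballI, clarify)
  fix \<phi> \<phi>' assume ff: "(\<phi>, \<phi>') \<in> H"
  from form_val_dom_H[OF sa sb ff] have fD: "\<phi> \<in> form_dom H" and fv: "form_val H \<phi> = Re (cinner \<phi>' \<phi>)"
    by auto
  from fl fD have fK: "\<phi> \<in> form_dom (krein_ext S c Q)" and le: "form_val (krein_ext S c Q) \<phi> \<le> form_val H \<phi>"
    unfolding form_le_def by auto
  have fK': "\<phi> \<in> form_dom (rel_shift c (rel_comp (adj (adj (companion S c Q))) (adj (companion S c Q))))"
    using fK unfolding krein_ext_def .
  obtain \<kappa> :: 'b where "form_val (rel_shift c (rel_comp (adj (adj (companion S c Q))) (adj (companion S c Q)))) \<phi>
      = (norm \<kappa>)\<^sup>2 + c * (norm \<phi>)\<^sup>2"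
    using krein_val[where J="companion S c Q" and c=c and f=\<phi>, OF fK'] by (elim exE conjE)
  hence "form_val (krein_ext S c Q) \<phi> = (norm \<kappa>)\<^sup>2 + c * (norm \<phi>)\<^sup>2" unfolding krein_ext_def .
  moreover have "(norm \<kappa>)\<^sup>2 \<ge> 0" by simp
  ultimately have "c * (norm \<phi>)\<^sup>2 \<le> Re (cinner \<phi>' \<phi>)" using le fv by linarith
  moreover have "Im (cinner \<phi>' \<phi>) = 0"
  proof -
    have "Im (cinner \<phi>' \<phi>) = Im (complex_of_real (Re (cinner \<phi>' \<phi>)))" using sa_real[OF sa ff] by (rule arg_cong)
    thus ?thesis by simp
  qed
  ultimately show "complex_of_real (c * (norm \<phi>)\<^sup>2) \<le> cinner \<phi>' \<phi>"
    by (simp add: less_eq_complex_def)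
qed

theorem corollary6p3:
  fixes S H :: "('a::{complex_inner, complete_space} \<times> 'a) set"
    and Q :: "'a \<Rightarrow> 'b::{complex_inner, complete_space}"
    and \<gamma> c :: real
  assumes "is_lin_rel S" and "semibounded S" and "lower_bound S \<gamma>"
    and "c \<le> \<gamma>"
    and "representing_map S c Q"
    and "selfadjoint H" and "semibounded H" and "S \<subseteq> H"
  shows "bounded_below_by c H \<longleftrightarrow> form_le (krein_ext S c Q) H"
proof
  assume "bounded_below_by c H"
  thus "form_le (krein_ext S c Q) H" by (rule dir1[OF assms(1) assms(5) assms(6) assms(8)])
next
  assume "form_le (krein_ext S c Q) H"
  thus "bounded_below_by c H" by (rule dir2[OF assms(6) assms(7)])
qed

end
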